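(* Consider the $n$-order passive filter, for $i=1,\dots,m$, \[ \begin{cases} x_{i}^{(n-1)} = -\sum_{k=1}^{n-1}\gamma_{ik}x_{i}^{(n-k-1)}+\gamma_{in}(b_{i}-\hat{b}_{i}),\\ \dot{\hat{b}}_{i} = -S(\omega_{m}-\hat{\eta})\hat{b}_{i}+w_{i},\\ \dot{\hat{\eta}} = -\Gamma_{p}\sum_{i=1}^{m}S(b_{i})\hat{b}_{i}, \end{cases} \qquad w_{i}=B_{pi}^{T}P_{pi}X_{i}, \] under the assumptions that at least two of the measured vectors $b_i$ are non-collinear, and that the gyro bias $\eta$ is bounded and constant ($\dot\eta=0$) and the measured angular velocity $\omega_m(\cdot)$ (hence $\omega(\cdot)$) is bounded. Then the errors $\tilde{b}_{i}=b_{i}-\hat{b}_{i}$, $i=1,\dots,m$, and $\tilde{\eta}=\eta-\hat{\eta}$ converge globally asymptotically to zero.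
   Context: A rigid body has attitude $R\in SO(3)$ with $\dot R=RS(\omega)$, where $\omega$ is the body angular velocity and $S(x)$ is the skew-symmetric matrix with $S(x)y=x\times y$. Given constant inertial vectors $r_i$, $i=1,\dots,m$, the body-frame measurements are $b_i=R^Tr_i$, so $\dot b_i=-S(\omega)b_i$. The rate gyro measures $\omega_m=\omega+\eta$ with unknown bias $\eta$, giving $\dot b_i=-S(\omega_m-\eta)b_i$, $\dot\eta=0$. For each $i$, $\Upsilon_i=(\gamma_{i1},\dots,\gamma_{in})\in\mathbb{R}^n$ is chosen so that both $s^n+\sum_{k=1}^n\gamma_{ik}s^{n-k}$ and $s^{n-1}+\sum_{k=1}^{n-1}\gamma_{ik}s^{n-1-k}$ are Hurwitz (such choices exist, e.g. $\gamma_{ik}=\binom{n}{k}\alpha^k$, $\alpha>0$); $x_i^{(j)}$ denotes the $j$-th time derivative of $x_i\in\mathbb{R}^3$. Set $X_i=[x_i^T,\dot x_i^T,\dots,x_i^{(n-2)T}]^T\in\mathbb{R}^{3(n-1)}$, $A_{pi}=A_{\pi(\Upsilon_i)}\otimes I_3$ where $A_{\pi(\Upsilon_i)}$ is the $(n-1)\times(n-1)$ companion matrix of $(\gamma_{i1},\dots,\gamma_{i,n-1})$ (ones on the superdiagonal, last row $(-\gamma_{i,n-1},\dots,-\gamma_{i1})$), $B_{pi}=\gamma_{in}e_{n-1}\otimes I_3$ with $e_{n-1}=(0,\dots,0,1)^T\in\mathbb{R}^{n-1}$, and $P_{pi}$ the symmetric positive definite solution of $A_{pi}^TP_{pi}+P_{pi}A_{pi}=-Q_{pi}$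 for a given symmetric positive definite $Q_{pi}$. $\Gamma_p$ is a positive definite diagonal gain matrix. *)

theory Defs
  imports "HOL-Analysis.Analysis"
begin

definition skew :: "real^3 \<Rightarrow> real^3^3" where
  "skew x = matrix (\<lambda>y. cross3 x y)"

definition SO3 :: "real^3^3 \<Rightarrow> bool" where
  "SO3 M \<longleftrightarrow> orthogonal_matrix M \<and> det M = 1"

definition meas :: "(real \<Rightarrow> real^3^3) \<Rightarrow> (nat \<Rightarrow> real^3) \<Rightarrow> nat \<Rightarrow> real \<Rightarrow> real^3" where
  "meas R r i t = transpose (R t) *v r i"

definition hurwitz_coeffs :: "(nat \<Rightarrow> real) \<Rightarrow> nat \<Rightarrow> bool" where
  "hurwitz_coeffs g d \<longleftrightarrow>
     (\<forall>z::complex. z ^ d + (\<Sum>k=1..d. complex_of_real (g k) * z ^ (d - k)) = 0 \<longrightarrow> Re z < 0)"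

text \<open>Companion matrix (d x d, 0-based indices) of (g_1,...,g_d):
  ones on the superdiagonal, last row (-g_d, ..., -g_1).\<close>
definition companion :: "(nat \<Rightarrow> real) \<Rightarrow> nat \<Rightarrow> nat \<Rightarrow> nat \<Rightarrow> real" where
  "companion g d p q = (if p + 1 < d then (if q = p + 1 then 1 else 0) else - g (d - q))"

text \<open>Kronecker product M \<otimes> I_3 (index p corresponds to block p div 3, component p mod 3).\<close>
definition kron_I3 :: "(nat \<Rightarrow> nat \<Rightarrow> real) \<Rightarrow> nat \<Rightarrow> nat \<Rightarrow> real" where
  "kron_I3 M p q = M (p div 3) (q div 3) * (if p mod 3 = q mod 3 then 1 else 0)"

definition Ap :: "(nat \<Rightarrow> real) \<Rightarrow> nat \<Rightarrow> nat \<Rightarrow> nat \<Rightarrow> real" where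
  "Ap g n = kron_I3 (companion g (n - 1))"

text \<open>B_{pi} = gamma_{in} e_{n-1} \<otimes> I_3, a 3(n-1) x 3 matrix.\<close>
definition Bp :: "(nat \<Rightarrow> real) \<Rightarrow> nat \<Rightarrow> nat \<Rightarrow> nat \<Rightarrow> real" where
  "Bp g n p k = g n * (if p div 3 = n - 2 then 1 else 0) * (if p mod 3 = k then 1 else 0)"

definition sym_on :: "nat \<Rightarrow> (nat \<Rightarrow> nat \<Rightarrow> real) \<Rightarrow> bool" where
  "sym_on N M \<longleftrightarrow> (\<forall>p<N. \<forall>q<N. M p q = M q p)"

definition posdef_on :: "nat \<Rightarrow> (nat \<Rightarrow> nat \<Rightarrow> real) \<Rightarrow> bool" where
  "posdef_on N M \<longleftrightarrow> sym_on N M \<and>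
     (\<forall>v::nat \<Rightarrow> real. (\<exists>p<N. v p \<noteq> 0) \<longrightarrow> (\<Sum>p<N. \<Sum>q<N. v p * M p q * v q) > 0)"

definition lyap_eq :: "nat \<Rightarrow> (nat \<Rightarrow> nat \<Rightarrow> real) \<Rightarrow> (nat \<Rightarrow> nat \<Rightarrow> real) \<Rightarrow> (nat \<Rightarrow> nat \<Rightarrow> real) \<Rightarrow> bool" where
  "lyap_eq N A P Q \<longleftrightarrow>
     (\<forall>p<N. \<forall>q<N. (\<Sum>s<N. A s p * P s q) + (\<Sum>s<N. P p s * A s q) = - Q p q)"

definition comp3 :: "real^3 \<Rightarrow> nat \<Rightarrow> real" where
  "comp3 v k = [v$1, v$2, v$3] ! k"

text \<open>X_i = [x_i; x_i'; ...; x_i^{(n-2)}] in R^{3(n-1)}; xs j is the j-th derivative.\<close>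
definition stackX :: "nat \<Rightarrow> (nat \<Rightarrow> real^3) \<Rightarrow> nat \<Rightarrow> real" where
  "stackX n xs p = (if p < 3 * (n - 1) then comp3 (xs (p div 3)) (p mod 3) else 0)"

definition corr_w :: "(nat \<Rightarrow> real) \<Rightarrow> nat \<Rightarrow> (nat \<Rightarrow> nat \<Rightarrow> real) \<Rightarrow> (nat \<Rightarrow> real) \<Rightarrow> real^3" where
  "corr_w g n P X =
     (let N = 3 * (n - 1);
          wk = (\<lambda>k. \<Sum>p<N. Bp g n p k * (\<Sum>q<N. P p q * X q))
      in vector [wk 0, wk 1, wk 2])"

text \<open>Indices i range over {0..<m} (paper: 1..m); gamma i k for k = 1..n.
  om_m is the measured angular velocity, eta the constant bias, omega = om_m - eta.
  xd i j is the j-th time derivative of x_i, j = 0..n-1.\<close>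
definition is_solution ::
  "nat \<Rightarrow> nat \<Rightarrow> (nat \<Rightarrow> nat \<Rightarrow> real) \<Rightarrow> real^3^3 \<Rightarrow> (nat \<Rightarrow> nat \<Rightarrow> nat \<Rightarrow> real)
   \<Rightarrow> (real \<Rightarrow> real^3) \<Rightarrow> real^3 \<Rightarrow> (nat \<Rightarrow> real^3)
   \<Rightarrow> (real \<Rightarrow> real^3^3) \<Rightarrow> (nat \<Rightarrow> real \<Rightarrow> real^3) \<Rightarrow> (real \<Rightarrow> real^3)
   \<Rightarrow> (nat \<Rightarrow> nat \<Rightarrow> real \<Rightarrow> real^3) \<Rightarrow> bool" where
  "is_solution n m gam Gam P om_m eta r R bh etah xd \<longleftrightarrow>
    (\<forall>t\<ge>0.
      SO3 (R t) \<and>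
      (R has_vector_derivative (R t ** skew (om_m t - eta))) (at t within {0..}) \<and>
      (\<forall>i<m.
        (\<forall>j<n - 1. (xd i j has_vector_derivative xd i (Suc j) t) (at t within {0..})) \<and>
        xd i (n - 1) t =
          - (\<Sum>k=1..n - 1. gam i k *\<^sub>R xd i (n - k - 1) t)
          + gam i n *\<^sub>R (meas R r i t - bh i t) \<and>
        (bh i has_vector_derivative
          (- cross3 (om_m t - etah t) (bh i t)
           + corr_w (gam i) n (P i) (stackX n (\<lambda>j. xd i j t)))) (at t within {0..})) \<and>
      (etah has_vector_derivative
         (- (Gam *v (\<Sum>i<m. cross3 (meas R r i t) (bh i t))))) (at t within {0..}))"

end

theory Submission
  imports Defs
begin


definition qf :: "nat \<Rightarrow> (nat \<Rightarrow> nat \<Rightarrow> real) \<Rightarrow> (nat \<Rightarrow> real) \<Rightarrow> real" where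
  "qf N M v = (\<Sum>p<N. \<Sum>q<N. v p * M p q * v q)"

lemma compact_K:
  "compact (PiE UNIV (\<lambda>p::nat. if p < N then {-1..1::real} else {0}))"
proof -
  have "compactin (product_topology (\<lambda>_. euclidean) UNIV) (PiE UNIV (\<lambda>p::nat. if p < N then {-1..1::real} else {0}))"
    by (subst compactin_PiE) auto
  then show ?thesis by (simp add: euclidean_product_topology)
qed

lemma qf_scale: "qf N M (\<lambda>p. c * v p) = c^2 * qf N M v"
  unfolding qf_def by (simp add: sum_distrib_left power2_eq_square algebra_simps)

lemma qf_cong: "(\<And>p. p < N \<Longrightarrow> u p = v p) \<Longrightarrow> qf N M u = qf N M v"
  unfolding qf_def by simp

lemma posdef_lower:
  assumes pd: "posdef_on N M"
  shows "\<exists>c>0. \<forall>v. c * (\<Sum>p<N. (v p)^2) \<le> qf N M v"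
proof (cases "N = 0")
  case True then show ?thesis by (intro exI[of _ 1]) (simp add: qf_def)
next
  case False
  define K where "K = PiE UNIV (\<lambda>p::nat. if p < N then {-1..1::real} else {0}) \<inter> {v. (\<Sum>p<N. (v p)^2) = 1}"
  have cs: "continuous_on UNIV (\<lambda>v::nat\<Rightarrow>real. \<Sum>p<N. (v p)^2)"
    by (intro continuous_intros continuous_on_product_then_coordinatewise continuous_on_id)
  have "closed {v::nat\<Rightarrow>real. (\<Sum>p<N. (v p)^2) = 1}"
    using continuous_closed_preimage_constant[OF cs closed_UNIV, of 1] by (simp add: vimage_def Collect_conj_eq)
  then have cK: "compact K" unfolding K_def using compact_K by (intro compact_Int_closed) auto
  define e0 where "e0 = (\<lambda>p::nat. if p = 0 then 1 else 0::real)"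
  have "(\<lambda>p. (e0 p)^2) = e0" by (auto simp: e0_def)
  then have "(\<Sum>p<N. (e0 p)^2) = (\<Sum>p<N. e0 p)" by (metis (no_types))
  also have "\<dots> = 1" using False unfolding e0_def by (subst sum.delta) auto
  finally have "(\<Sum>p<N. (e0 p)^2) = 1" .
  then have "e0 \<in> K" unfolding K_def e0_def using False by (auto simp: PiE_def extensional_def)
  then have ne: "K \<noteq> {}" by auto
  have cq: "continuous_on K (qf N M)"
    unfolding qf_def
    by (intro continuous_intros continuous_on_product_then_coordinatewise continuous_on_id)
  obtain u where uK: "u \<in> K" and umin: "\<And>y. y \<in> K \<Longrightarrow> qf N M u \<le> qf N M y"
    using continuous_attains_inf[OF cK ne cq] by blast
  have "\<exists>p<N. u p \<noteq> 0"
  proof (rule ccontr)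
    assume "\<not> ?thesis"
    then have "(\<Sum>p<N. (u p)^2) = 0" by simp
    with uK show False unfolding K_def by simp
  qed
  then have cpos: "qf N M u > 0" using pd unfolding posdef_on_def qf_def by blast
  show ?thesis
  proof (intro exI[of _ "qf N M u"] conjI allI cpos)
    fix v :: "nat \<Rightarrow> real"
    define s where "s = (\<Sum>p<N. (v p)^2)"
    show "qf N M u * (\<Sum>p<N. (v p)^2) \<le> qf N M v"
    proof (cases "s = 0")
      case True
      then have "\<forall>p<N. v p = 0" unfolding s_def
        by (subst (asm) sum_nonneg_eq_0_iff) auto
      then have "qf N M v = 0" unfolding qf_def by simp
      then show ?thesis using True s_def by simp
    next
      case False
      have s0: "s > 0" using False unfolding s_def by (metis sum_nonneg zero_le_power2 order_le_less)
      define w where "w = (\<lambda>p. if p < N then v p / sqrt s else 0)"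
      have sq: "(\<Sum>p<N. (w p)^2) = 1"
        using s0 unfolding w_def s_def[symmetric]
        by (simp add: power_divide sum_divide_distrib[symmetric] s_def)
      have "\<forall>p<N. -1 \<le> w p \<and> w p \<le> 1"
      proof (intro allI impI)
        fix p assume "p < N"
        have "(w p)^2 \<le> (\<Sum>p<N. (w p)^2)"
          using \<open>p < N\<close> by (intro member_le_sum) auto
        then have "(w p)^2 \<le> 1^2" using sq by simp
        then have "\<bar>w p\<bar> \<le> 1" using abs_le_square_iff by (metis abs_one)
        then show "-1 \<le> w p \<and> w p \<le> 1" by linarith
      qed
      moreover have "\<forall>p. \<not> p < N \<longrightarrow> w p = 0" by (simp add: w_def)
      ultimately have "w \<in> K" unfolding K_def using sq by (auto simp: PiE_def extensional_def)
      then have "qf N M u \<le> qf N M w" by (rule umin)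
      also have "qf N M w = qf N M (\<lambda>p. (1 / sqrt s) * v p)"
        by (rule qf_cong) (simp add: w_def)
      also have "\<dots> = (1 / sqrt s)^2 * qf N M v" by (rule qf_scale)
      also have "\<dots> = qf N M v / s" using s0 by (simp add: power_divide)
      finally show ?thesis using s0 unfolding s_def[symmetric] by (simp add: field_simps)
    qed
  qed
qed



lemma mvt0:
  fixes f f' :: "real \<Rightarrow> real"
  assumes "0 \<le> a" "a \<le> b" "\<forall>t\<ge>0. (f has_real_derivative f' t) (at t within {0..})"
  shows "\<exists>x\<in>{a..b}. f b - f a = f' x * (b - a)"
proof -
  have "\<And>x. a \<le> x \<Longrightarrow> x \<le> b \<Longrightarrow> (f has_derivative (\<lambda>d. f' x * d)) (at x within {a..b})"
  proof -
    fix x assume "a \<le> x" "x \<le> b"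
    then have "(f has_real_derivative f' x) (at x within {0..})" using assms by auto
    then have "(f has_real_derivative f' x) (at x within {a..b})"
      by (rule has_field_derivative_subset) (use assms in auto)
    then show "(f has_derivative (\<lambda>d. f' x * d)) (at x within {a..b})"
      by (simp add: has_field_derivative_def)
  qed
  from mvt_very_simple[OF assms(2) this] show ?thesis by auto
qed

lemma barbalat_core:
  fixes y g h g' :: "real \<Rightarrow> real"
  assumes dy: "\<forall>t\<ge>0. (y has_real_derivative (g t + h t)) (at t within {0..})"
    and dg: "\<forall>t\<ge>0. (g has_real_derivative g' t) (at t within {0..})"
    and bd: "\<forall>t\<ge>0. \<bar>g' t\<bar> \<le> M"
    and e: "e > 0" and M: "M > 0" and T: "T \<ge> 0"
    and hT: "\<forall>t\<ge>T. \<bar>h t\<bar> \<le> e/4"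
    and yT: "\<forall>t\<ge>T. \<bar>y t - L\<bar> < e * (e / (2*M)) / 16"
    and t: "t \<ge> T" and gt: "g t \<ge> e"
  shows False
proof -
  define d where "d = e / (2*M)"
  have d: "d > 0" using e M by (simp add: d_def)
  have gs: "g s \<ge> e/2" if "t \<le> s" "s \<le> t + d" for s
  proof -
    obtain x where x: "x \<in> {t..s}" "g s - g t = g' x * (s - t)"
      using mvt0[OF _ \<open>t \<le> s\<close> dg] t T by auto
    have "\<bar>g' x\<bar> \<le> M" using bd x t T by auto
    then have "\<bar>g' x * (s - t)\<bar> \<le> M * d"
      using that d by (auto simp: abs_mult intro!: mult_mono)
    also have "M * d = e/2" using M by (simp add: d_def)
    finally show ?thesis using x gt by linarith
  qed
  obtain x where x: "x \<in> {t..t+d}" "y (t+d) - y t = (g x + h x) * (t + d - t)"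
    using mvt0[of t "t+d" y "\<lambda>x. g x + h x"] dy t T d by auto
  have "g x \<ge> e/2" using gs[of x] x by auto
  moreover have "\<bar>h x\<bar> \<le> e/4" using hT x t by auto
  ultimately have "g x + h x \<ge> e/4" by linarith
  then have "y (t+d) - y t \<ge> e/4 * d" using x d by (simp add: mult_right_mono)
  moreover have "\<bar>y (t+d) - L\<bar> < e * d / 16" "\<bar>y t - L\<bar> < e * d / 16"
    using yT t d by (auto simp: d_def)
  moreover have "e * d > 0" using e d by simp
  moreover have "e/4*d = (e*d)/4" by simp
  ultimately show False by linarith
qed

lemma barbalat:
  fixes y g h g' :: "real \<Rightarrow> real"
  assumes dy: "\<forall>t\<ge>0. (y has_real_derivative (g t + h t)) (at t within {0..})"
    and dg: "\<forall>t\<ge>0. (g has_real_derivative g' t) (at t within {0..})"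
    and bd: "\<forall>t\<ge>0. \<bar>g' t\<bar> \<le> M"
    and h0: "(h \<longlongrightarrow> 0) at_top"
    and yc: "(y \<longlongrightarrow> L) at_top"
  shows "(g \<longlongrightarrow> 0) at_top"
proof (rule tendstoI)
  fix e :: real assume e: "e > 0"
  define M' where "M' = max M 1"
  have M': "M' > 0" "\<forall>t\<ge>0. \<bar>g' t\<bar> \<le> M'" using bd by (auto simp: M'_def)
  have "eventually (\<lambda>t. dist (h t) 0 < e/4) at_top" using tendstoD[OF h0, of "e/4"] e by (simp only: divide_pos_pos zero_less_numeral)
  moreover have "eventually (\<lambda>t. dist (y t) L < e * (e / (2*M')) / 16) at_top"
    using tendstoD[OF yc, of "e * (e / (2*M')) / 16"] e M' by (simp only: divide_pos_pos mult_pos_pos zero_less_numeral mult_2 add_pos_pos)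
  moreover have "eventually (\<lambda>t::real. t \<ge> 0) at_top" by (rule eventually_ge_at_top)
  ultimately have "eventually (\<lambda>t. dist (h t) 0 < e/4 \<and> dist (y t) L < e * (e / (2*M')) / 16 \<and> t \<ge> 0) at_top"
    by eventually_elim auto
  then obtain T where T: "\<forall>t\<ge>T. dist (h t) 0 < e/4 \<and> dist (y t) L < e * (e / (2*M')) / 16 \<and> t \<ge> 0"
    by (auto simp: eventually_at_top_linorder)
  have T0: "T \<ge> 0" using T by auto
  have hT: "\<forall>t\<ge>T. \<bar>h t\<bar> \<le> e/4" using T by (auto simp: dist_real_def)
  have yT: "\<forall>t\<ge>T. \<bar>y t - L\<bar> < e * (e / (2*M')) / 16" using T by (auto simp: dist_real_def)
  have hT': "\<forall>t\<ge>T. \<bar>- h t\<bar> \<le> e/4" using hT by auto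
  have yT': "\<forall>t\<ge>T. \<bar>- y t - (- L)\<bar> < e * (e / (2*M')) / 16" using yT by (auto simp: abs_minus_commute)
  have dy': "\<forall>t\<ge>0. ((\<lambda>t. - y t) has_real_derivative (- g t + - h t)) (at t within {0..})"
    using dy by (auto intro!: derivative_eq_intros)
  have dg': "\<forall>t\<ge>0. ((\<lambda>t. - g t) has_real_derivative - g' t) (at t within {0..})"
    using dg by (auto intro!: derivative_eq_intros)
  have bd': "\<forall>t\<ge>0. \<bar>- g' t\<bar> \<le> M'" using M' by auto
  show "eventually (\<lambda>t. dist (g t) 0 < e) at_top"
    unfolding eventually_at_top_linorder
  proof (intro exI[of _ T] allI impI)
    fix t assume t: "t \<ge> T"
    have "\<not> g t \<ge> e" using barbalat_core[OF dy dg M'(2) e M'(1) T0 hT yT t] by blast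
    moreover have "\<not> - g t \<ge> e"
      using barbalat_core[OF dy' dg' bd' e M'(1) T0 hT' yT' t] by blast
    ultimately show "dist (g t) 0 < e" by (auto simp: dist_real_def)
  qed
qed




lemma lyapA:
  fixes A P Q :: "nat \<Rightarrow> nat \<Rightarrow> real"
  assumes ly: "lyap_eq N A P Q"
  shows "(\<Sum>p<N. \<Sum>q<N. (\<Sum>s<N. A p s * x s) * P p q * x q + x p * P p q * (\<Sum>s<N. A q s * x s))
         = - qf N Q x"
proof -
  have 1: "(\<Sum>p<N. \<Sum>q<N. (\<Sum>s<N. A p s * x s) * P p q * x q)
        = (\<Sum>a<N. \<Sum>b<N. x a * x b * (\<Sum>s<N. A s a * P s b))"
  proof -
    have "(\<Sum>p<N. \<Sum>q<N. (\<Sum>s<N. A p s * x s) * P p q * x q)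
       = (\<Sum>p<N. \<Sum>q<N. \<Sum>s<N. x s * x q * (A p s * P p q))"
      unfolding sum_distrib_right sum_distrib_left by (simp add: mult_ac)
    also have "\<dots> = (\<Sum>p<N. \<Sum>s<N. \<Sum>q<N. x s * x q * (A p s * P p q))"
      by (rule sum.cong[OF refl], rule sum.swap)
    also have "\<dots> = (\<Sum>s<N. \<Sum>p<N. \<Sum>q<N. x s * x q * (A p s * P p q))"
      by (rule sum.swap)
    also have "\<dots> = (\<Sum>s<N. \<Sum>q<N. \<Sum>p<N. x s * x q * (A p s * P p q))"
      by (rule sum.cong[OF refl], rule sum.swap)
    also have "\<dots> = (\<Sum>a<N. \<Sum>b<N. x a * x b * (\<Sum>s<N. A s a * P s b))"
      by (simp add: sum_distrib_left)
    finally show ?thesis .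
  qed
  have 2: "(\<Sum>p<N. \<Sum>q<N. x p * P p q * (\<Sum>s<N. A q s * x s))
        = (\<Sum>a<N. \<Sum>b<N. x a * x b * (\<Sum>s<N. P a s * A s b))"
  proof -
    have "(\<Sum>p<N. \<Sum>q<N. x p * P p q * (\<Sum>s<N. A q s * x s))
       = (\<Sum>p<N. \<Sum>q<N. \<Sum>s<N. x p * x s * (P p q * A q s))"
      unfolding sum_distrib_right sum_distrib_left by (simp add: mult_ac)
    also have "\<dots> = (\<Sum>p<N. \<Sum>s<N. \<Sum>q<N. x p * x s * (P p q * A q s))"
      by (rule sum.cong[OF refl], rule sum.swap)
    also have "\<dots> = (\<Sum>a<N. \<Sum>b<N. x a * x b * (\<Sum>s<N. P a s * A s b))"
      by (simp add: sum_distrib_left)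
    finally show ?thesis .
  qed
  have "(\<Sum>p<N. \<Sum>q<N. (\<Sum>s<N. A p s * x s) * P p q * x q + x p * P p q * (\<Sum>s<N. A q s * x s))
      = (\<Sum>a<N. \<Sum>b<N. x a * x b * ((\<Sum>s<N. A s a * P s b) + (\<Sum>s<N. P a s * A s b)))"
    by (simp add: sum.distrib 1 2 distrib_left)
  also have "\<dots> = (\<Sum>a<N. \<Sum>b<N. x a * x b * (- Q a b))"
    using ly unfolding lyap_eq_def by (intro sum.cong refl) auto
  also have "\<dots> = - qf N Q x" unfolding qf_def by (simp add: sum_negf mult_ac)
  finally show ?thesis .
qed

lemma lyapB:
  fixes P :: "nat \<Rightarrow> nat \<Rightarrow> real"
  assumes sym: "sym_on N P"
  shows "(\<Sum>p<N. \<Sum>q<N. (\<Sum>k<K. Bm p k * bb k) * P p q * x q + x p * P p q * (\<Sum>k<K. Bm q k * bb k))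
         = 2 * (\<Sum>k<K. bb k * (\<Sum>p<N. Bm p k * (\<Sum>q<N. P p q * x q)))"
proof -
  have 1: "(\<Sum>p<N. \<Sum>q<N. (\<Sum>k<K. Bm p k * bb k) * P p q * x q) = (\<Sum>k<K. bb k * (\<Sum>p<N. Bm p k * (\<Sum>q<N. P p q * x q)))"
  proof -
    have "(\<Sum>p<N. \<Sum>q<N. (\<Sum>k<K. Bm p k * bb k) * P p q * x q) = (\<Sum>p<N. \<Sum>q<N. \<Sum>k<K. bb k * (Bm p k * (P p q * x q)))"
      unfolding sum_distrib_right sum_distrib_left by (simp add: mult_ac)
    also have "\<dots> = (\<Sum>p<N. \<Sum>k<K. \<Sum>q<N. bb k * (Bm p k * (P p q * x q)))"
      by (rule sum.cong[OF refl], rule sum.swap)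
    also have "\<dots> = (\<Sum>k<K. \<Sum>p<N. \<Sum>q<N. bb k * (Bm p k * (P p q * x q)))"
      by (rule sum.swap)
    also have "\<dots> = (\<Sum>k<K. bb k * (\<Sum>p<N. Bm p k * (\<Sum>q<N. P p q * x q)))"
      by (simp add: sum_distrib_left)
    finally show ?thesis .
  qed
  have 2: "(\<Sum>p<N. \<Sum>q<N. x p * P p q * (\<Sum>k<K. Bm q k * bb k)) = (\<Sum>p<N. \<Sum>q<N. (\<Sum>k<K. Bm p k * bb k) * P p q * x q)"
  proof -
    have "(\<Sum>p<N. \<Sum>q<N. x p * P p q * (\<Sum>k<K. Bm q k * bb k)) = (\<Sum>q<N. \<Sum>p<N. x p * P p q * (\<Sum>k<K. Bm q k * bb k))"
      by (rule sum.swap)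
    also have "\<dots> = (\<Sum>q<N. \<Sum>p<N. (\<Sum>k<K. Bm q k * bb k) * P q p * x p)"
      using sym unfolding sym_on_def by (intro sum.cong refl) (simp add: mult_ac)
    finally show ?thesis .
  qed
  show ?thesis unfolding sum.distrib 1 2 by simp
qed



lemma sum3: "(\<Sum>q<3*d. f q) = (\<Sum>j<d. \<Sum>c<3. f (3*j + c::nat))"
proof (induction d)
  case 0 then show ?case by simp
next
  case (Suc d)
  have eq: "{..<3 * Suc d} = {..<3*d} \<union> {3*d, 3*d+1, 3*d+2}" by auto
  have "(\<Sum>q<3*Suc d. f q) = (\<Sum>q<3*d. f q) + (f (3*d) + f (3*d+1) + f (3*d+2))"
    unfolding eq by (simp add: sum.union_disjoint add_ac)
  then show ?case using Suc by (simp add: numeral_3_eq_3)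
qed

lemma comp3_nth:
  "comp3 v 0 = v$1" "comp3 v 1 = v$2" "comp3 v 2 = v$3"
  by (simp_all add: comp3_def numeral_2_eq_2)

lemma comp3_cases: "(k::nat) < 3 \<Longrightarrow> k = 0 \<or> k = Suc 0 \<or> k = Suc (Suc 0)" by auto

lemma comp3_add: "k < 3 \<Longrightarrow> comp3 (a + b) k = comp3 a k + comp3 b k"
  by (auto dest!: comp3_cases simp: comp3_def)
lemma comp3_diff: "k < 3 \<Longrightarrow> comp3 (a - b) k = comp3 a k - comp3 b k"
  by (auto dest!: comp3_cases simp: comp3_def)
lemma comp3_neg: "k < 3 \<Longrightarrow> comp3 (- a) k = - comp3 a k"
  by (auto dest!: comp3_cases simp: comp3_def)
lemma comp3_scale: "k < 3 \<Longrightarrow> comp3 (c *\<^sub>R a) k = c * comp3 a k"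
  by (auto dest!: comp3_cases simp: comp3_def)
lemma comp3_sum: "k < 3 \<Longrightarrow> comp3 (\<Sum>i\<in>I. f i) k = (\<Sum>i\<in>I. comp3 (f i) k)"
  by (auto dest!: comp3_cases simp: comp3_def)

lemma Xdot:
  fixes g :: "nat \<Rightarrow> real" and x :: "nat \<Rightarrow> real^3"
  assumes n2: "n \<ge> 2"
    and xl: "x (n - 1) = - (\<Sum>k=1..n - 1. g k *\<^sub>R x (n - k - 1)) + g n *\<^sub>R bt"
    and p: "p < 3 * (n - 1)"
  shows "comp3 (x (p div 3 + 1)) (p mod 3) =
         (\<Sum>q<3 * (n - 1). Ap g n p q * stackX n x q) + (\<Sum>k<3. Bp g n p k * comp3 bt k)"
proof -
  define j where "j = p div 3"
  define c where "c = p mod 3"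
  have c3: "c < 3" by (simp add: c_def)
  have jn: "j < n - 1" using p by (simp add: j_def less_mult_imp_div_less mult.commute)
  have sA: "(\<Sum>q<3 * (n - 1). Ap g n p q * stackX n x q)
      = (\<Sum>j'<n - 1. companion g (n - 1) j j' * comp3 (x j') c)"
  proof -
    have "(\<Sum>q<3 * (n - 1). Ap g n p q * stackX n x q)
        = (\<Sum>j'<n - 1. \<Sum>c'<3. Ap g n p (3*j' + c') * stackX n x (3*j' + c'))"
      by (rule sum3)
    also have "\<dots> = (\<Sum>j'<n - 1. \<Sum>c'<3. (if c = c' then companion g (n - 1) j j' * comp3 (x j') c' else 0))"
    proof (rule sum.cong[OF refl], rule sum.cong[OF refl])
      fix j' c' assume "j' \<in> {..<n - 1}" "c' \<in> {..<3::nat}"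
      then have "3*j' + c' < 3 * (n - 1)" by auto
      moreover have "(3*j' + c') div 3 = j'" "(3*j' + c') mod 3 = c'" using \<open>c' \<in> _\<close> by auto
      ultimately show "Ap g n p (3*j' + c') * stackX n x (3*j' + c') =
           (if c = c' then companion g (n - 1) j j' * comp3 (x j') c' else 0)"
        by (simp add: Ap_def kron_I3_def stackX_def j_def c_def)
    qed
    also have "\<dots> = (\<Sum>j'<n - 1. companion g (n - 1) j j' * comp3 (x j') c)"
      using c3 by (simp add: sum.delta)
    finally show ?thesis .
  qed
  show ?thesis
  proof (cases "j + 1 < n - 1")
    case True
    have "(\<Sum>j'<n - 1. companion g (n - 1) j j' * comp3 (x j') c) = comp3 (x (j+1)) c"
      using True by (simp add: companion_def if_distrib[of "\<lambda>z. z * _"] cong: if_cong)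
    moreover have "(\<Sum>k<3. Bp g n p k * comp3 bt k) = 0"
      using True by (simp add: Bp_def j_def)
    ultimately show ?thesis using sA by (simp add: j_def c_def)
  next
    case False
    then have jj: "j = n - 2" using jn by simp
    have "(\<Sum>j'<n - 1. companion g (n - 1) j j' * comp3 (x j') c)
        = (\<Sum>j'<n - 1. - g (n - 1 - j') * comp3 (x j') c)"
      using False by (simp add: companion_def)
    also have "\<dots> = (\<Sum>k=1..n - 1. - g k * comp3 (x (n - k - 1)) c)"
      by (rule sum.reindex_bij_witness[of _ "\<lambda>k. n - 1 - k" "\<lambda>j'. n - 1 - j'"]) auto
    finally have A: "(\<Sum>j'<n - 1. companion g (n - 1) j j' * comp3 (x j') c)
        = - (\<Sum>k=1..n - 1. g k * comp3 (x (n - k - 1)) c)"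
      by (simp add: sum_negf)
    have B: "(\<Sum>k<3. Bp g n p k * comp3 bt k) = g n * comp3 bt c"
      using jj c3 unfolding Bp_def j_def[symmetric] c_def[symmetric]
      by (simp add: if_distrib[of "\<lambda>z. _ * z"] if_distrib[of "\<lambda>z. z * _"] sum.delta cong: if_cong)
    have "comp3 (x (n - 1)) c = - (\<Sum>k=1..n - 1. g k * comp3 (x (n - k - 1)) c) + g n * comp3 bt c"
      using c3 unfolding xl by (simp add: comp3_add comp3_diff comp3_neg comp3_sum comp3_scale)
    moreover have "j + 1 = n - 1" using jj n2 by simp
    ultimately show ?thesis using sA A B by (simp add: j_def c_def)
  qed
qed



lemma norm_orth: "orthogonal_matrix (Q::real^'n^'n) \<Longrightarrow> norm (Q *v x) = norm x"
  by (metis orthogonal_transformation_matrix orthogonal_transformation_norm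
      matrix_vector_mul_linear matrix_of_matrix_vector_mul)

lemma SO3_rot: "SO3 R \<Longrightarrow> rotation_matrix R" by (simp add: SO3_def rotation_matrix_def)

lemma SO3_norm_bt: "SO3 R \<Longrightarrow> norm (transpose R *v r) = norm r"
  by (metis SO3_def norm_orth orthogonal_matrix_transpose)

lemma SO3_cross: assumes "SO3 R"
  shows "norm (cross3 e (transpose R *v r)) = norm (cross3 (R *v e) r)"
proof -
  have o: "orthogonal_matrix R" using assms by (simp add: SO3_def)
  have "R ** transpose R = mat 1" using o by (simp add: orthogonal_matrix_def)
  then have rr: "R *v (transpose R *v r) = r" by (metis matrix_vector_mul_assoc matrix_vector_mul_lid)
  have "norm (cross3 e (transpose R *v r)) = norm (R *v cross3 e (transpose R *v r))"
    using o by (simp add: norm_orth)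
  also have "R *v cross3 e (transpose R *v r) = cross3 (R *v e) (R *v (transpose R *v r))"
    using cross_rotation_matrix[OF SO3_rot[OF assms]] by simp
  finally show ?thesis using rr by simp
qed

lemma cross_inj_bound:
  fixes r1 r2 :: "real^3"
  assumes nc: "\<not> collinear {0, r1, r2}"
  shows "\<exists>B>0. \<forall>u. B * norm u \<le> norm (cross3 u r1) + norm (cross3 u r2)"
proof -
  define f where "f u = (cross3 u r1, cross3 u r2)" for u
  have lf: "linear f"
    by (rule linearI) (simp_all add: f_def cross_add_left cross_mult_left)
  have "inj f"
    unfolding linear_injective_0[OF lf]
  proof (intro allI impI)
    fix u assume "f u = 0"
    then have c1: "cross3 u r1 = 0" and c2: "cross3 u r2 = 0" by (auto simp: f_def zero_prod_def)
    show "u = 0"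
    proof (rule ccontr)
      assume u: "u \<noteq> 0"
      from c1 u obtain a where a: "r1 = 0 \<or> r1 = a *\<^sub>R u"
        unfolding cross_eq_0 collinear_lemma by blast
      from c2 u obtain b where b: "r2 = 0 \<or> r2 = b *\<^sub>R u"
        unfolding cross_eq_0 collinear_lemma by blast
      have "collinear {0, r1, r2}"
        unfolding collinear_lemma
      proof (cases "r1 = 0 \<or> r2 = 0")
        case False
        then have "r1 = a *\<^sub>R u" "r2 = b *\<^sub>R u" "a \<noteq> 0" using a b by auto
        then have "r2 = (b / a) *\<^sub>R r1" by simp
        then show "r1 = 0 \<or> r2 = 0 \<or> (\<exists>c. r2 = c *\<^sub>R r1)" by blast
      qed auto
      with nc show False by simp
    qed
  qed
  then obtain B where B: "B > 0" "\<And>x. B * norm x \<le> norm (f x)"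
    using linear_inj_bounded_below_pos[OF lf] by blast
  show ?thesis
  proof (intro exI[of _ B] conjI allI B(1))
    fix u
    have "B * norm u \<le> norm (f u)" by (rule B(2))
    also have "\<dots> \<le> norm (cross3 u r1) + norm (cross3 u r2)" unfolding f_def by (rule norm_Pair_le)
    finally show "B * norm u \<le> norm (cross3 u r1) + norm (cross3 u r2)" .
  qed
qed

lemma key_identity:
  fixes b bh om eta etah w :: "real^3"
  shows "(b - bh) \<bullet> w + (b - bh) \<bullet> (- cross3 (om - eta) b - (- cross3 (om - etah) bh + w))
         + (eta - etah) \<bullet> cross3 b bh = 0"
  by (simp add: cross3_simps)

lemma btdot_form:
  fixes b bh om eta etah w :: "real^3"
  shows "- cross3 (om - eta) b - (- cross3 (om - etah) bh + w)
       = - cross3 (om - eta) (b - bh) + cross3 (eta - etah) bh - w"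
  by (simp add: cross3_simps)

lemma comp3_deriv:
  assumes "k < 3" "(f has_vector_derivative f') F"
  shows "((\<lambda>t. comp3 (f t) k) has_real_derivative comp3 f' k) F"
proof -
  have *: "\<And>i. ((\<lambda>t. f t $ i) has_real_derivative f' $ i) F"
    using bounded_linear.has_vector_derivative[OF bounded_linear_vec_nth assms(2)]
    by (simp add: has_real_derivative_iff_has_vector_derivative)
  from assms(1) show ?thesis by (auto dest!: comp3_cases simp: comp3_def *)
qed

lemma qf_deriv:
  assumes "\<forall>p<N. ((\<lambda>t. x t p) has_real_derivative x' p) (at t0 within S)"
  shows "((\<lambda>t. qf N M (x t)) has_real_derivative
     (\<Sum>p<N. \<Sum>q<N. x' p * M p q * x t0 q + x t0 p * M p q * x' q)) (at t0 within S)"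
  unfolding qf_def
  by (rule DERIV_sum, rule DERIV_sum, rule derivative_eq_intros, rule derivative_eq_intros,
      use assms in auto)

lemma transpose_skew: "transpose (skew w) *v y = - cross3 w y"
  by (simp add: skew_def matrix_def transpose_def matrix_vector_mult_def cross3_def vec_eq_iff
      sum_3 axis_def forall_3)

lemma bl_tr: "bounded_linear (\<lambda>M::real^3^3. transpose M *v v)"
proof -
  have "linear (\<lambda>M::real^3^3. transpose M *v v)"
    by (rule linearI) (simp_all add: vec_eq_iff transpose_def matrix_vector_mult_def sum.distrib
        algebra_simps sum_distrib_left)
  then show ?thesis by (simp add: linear_conv_bounded_linear)
qed





lemma norm_le_comp3: "norm (v::real^3) \<le> \<bar>comp3 v 0\<bar> + \<bar>comp3 v 1\<bar> + \<bar>comp3 v 2\<bar>"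
  using norm_le_l1_cart[of v] by (simp add: sum_3 comp3_def)

lemma comp3_le_norm: "k < 3 \<Longrightarrow> \<bar>comp3 v k\<bar> \<le> norm v"
  by (auto dest!: comp3_cases simp: comp3_def component_le_norm_cart)

lemma norm_cross_le: "norm (cross3 a b) \<le> norm a * norm b"
proof -
  have "(norm (cross3 a b))^2 \<le> (norm a * norm b)^2"
    using norm_cross_dot[of a b] zero_le_power2[of "a \<bullet> b"] by linarith
  then show ?thesis by (rule power2_le_imp_le) simp
qed

lemma unif:
  assumes "\<forall>i<m. \<exists>B. Pr i B" and mono: "\<And>i B B'. Pr i B \<Longrightarrow> B \<le> B' \<Longrightarrow> Pr i B'"
  shows "\<exists>B. \<forall>i<m. Pr (i::nat) (B::real)"
proof -
  from assms(1) obtain Bf where Bf: "\<forall>i<m. Pr i (Bf i)" by metis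
  have "Pr i (\<Sum>i<m. \<bar>Bf i\<bar>)" if "i < m" for i
  proof (rule mono[OF Bf[rule_format, OF that]])
    have "Bf i \<le> \<bar>Bf i\<bar>" by simp
    also have "\<dots> \<le> (\<Sum>i<m. \<bar>Bf i\<bar>)" using that by (intro member_le_sum) auto
    finally show "Bf i \<le> (\<Sum>i<m. \<bar>Bf i\<bar>)" .
  qed
  then show ?thesis by blast
qed

lemma qf_deriv_bound:
  fixes x x' :: "nat \<Rightarrow> real" and M :: "nat \<Rightarrow> nat \<Rightarrow> real"
  assumes "\<forall>p<N. \<bar>x p\<bar> \<le> B" "\<forall>p<N. \<bar>x' p\<bar> \<le> B"
  shows "\<bar>\<Sum>p<N. \<Sum>q<N. x' p * M p q * x q + x p * M p q * x' q\<bar> \<le> (\<Sum>p<N. \<Sum>q<N. 2 * (B * \<bar>M p q\<bar> * B))"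
proof -
  have "\<bar>\<Sum>p<N. \<Sum>q<N. x' p * M p q * x q + x p * M p q * x' q\<bar> \<le> (\<Sum>p<N. \<Sum>q<N. \<bar>x' p * M p q * x q + x p * M p q * x' q\<bar>)"
  proof -
    have "\<bar>\<Sum>p<N. \<Sum>q<N. x' p * M p q * x q + x p * M p q * x' q\<bar> \<le> (\<Sum>p<N. \<bar>\<Sum>q<N. x' p * M p q * x q + x p * M p q * x' q\<bar>)"
      by (rule sum_abs)
    also have "\<dots> \<le> (\<Sum>p<N. \<Sum>q<N. \<bar>x' p * M p q * x q + x p * M p q * x' q\<bar>)"
      by (intro sum_mono sum_abs)
    finally show ?thesis .
  qed
  also have "\<dots> \<le> (\<Sum>p<N. \<Sum>q<N. 2 * (B * \<bar>M p q\<bar> * B))"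
  proof (rule sum_mono, rule sum_mono)
    fix p q assume "p \<in> {..<N}" "q \<in> {..<N}"
    then have a: "\<bar>x p\<bar> \<le> B" "\<bar>x' p\<bar> \<le> B" "\<bar>x q\<bar> \<le> B" "\<bar>x' q\<bar> \<le> B" using assms by auto
    have "\<bar>x' p * M p q * x q\<bar> \<le> B * \<bar>M p q\<bar> * B"
      unfolding abs_mult using a by (intro mult_mono) auto
    moreover have "\<bar>x p * M p q * x' q\<bar> \<le> B * \<bar>M p q\<bar> * B"
      unfolding abs_mult using a by (intro mult_mono) auto
    ultimately show "\<bar>x' p * M p q * x q + x p * M p q * x' q\<bar> \<le> 2 * (B * \<bar>M p q\<bar> * B)"
      by (smt (verit) abs_triangle_ineq)
  qed
  finally show ?thesis .
qed

lemma lin_bound: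
  fixes Bm :: "nat \<Rightarrow> real" and Pm :: "nat \<Rightarrow> nat \<Rightarrow> real" and x :: "nat \<Rightarrow> real"
  assumes "\<forall>q<N. \<bar>x q\<bar> \<le> B"
  shows "\<bar>\<Sum>p<N. Bm p * (\<Sum>q<N. Pm p q * x q)\<bar> \<le> (\<Sum>p<N. \<bar>Bm p\<bar> * (\<Sum>q<N. \<bar>Pm p q\<bar> * B))"
proof -
  have "\<bar>\<Sum>p<N. Bm p * (\<Sum>q<N. Pm p q * x q)\<bar> \<le> (\<Sum>p<N. \<bar>Bm p * (\<Sum>q<N. Pm p q * x q)\<bar>)"
    by (rule sum_abs)
  also have "\<dots> \<le> (\<Sum>p<N. \<bar>Bm p\<bar> * (\<Sum>q<N. \<bar>Pm p q\<bar> * B))"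
  proof (rule sum_mono)
    fix p assume "p \<in> {..<N}"
    have "\<bar>\<Sum>q<N. Pm p q * x q\<bar> \<le> (\<Sum>q<N. \<bar>Pm p q * x q\<bar>)" by (rule sum_abs)
    also have "\<dots> \<le> (\<Sum>q<N. \<bar>Pm p q\<bar> * B)"
      using assms by (intro sum_mono) (auto simp: abs_mult intro: mult_left_mono)
    finally show "\<bar>Bm p * (\<Sum>q<N. Pm p q * x q)\<bar> \<le> \<bar>Bm p\<bar> * (\<Sum>q<N. \<bar>Pm p q\<bar> * B)"
      by (auto simp: abs_mult intro: mult_left_mono)
  qed
  finally show ?thesis .
qed

locale sol =
  fixes n m :: nat
    and gam :: "nat \<Rightarrow> nat \<Rightarrow> real"
    and Gam :: "real^3^3"
    and P Q :: "nat \<Rightarrow> nat \<Rightarrow> nat \<Rightarrow> real"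
    and om_m :: "real \<Rightarrow> real^3"
    and eta :: "real^3"
    and r :: "nat \<Rightarrow> real^3"
    and R :: "real \<Rightarrow> real^3^3" and bh :: "nat \<Rightarrow> real \<Rightarrow> real^3" and etah :: "real \<Rightarrow> real^3"
    and xd :: "nat \<Rightarrow> nat \<Rightarrow> real \<Rightarrow> real^3"
  assumes n2: "n \<ge> 2"
    and gn: "\<forall>i<m. gam i n \<noteq> 0"
    and Gam_diag: "\<forall>a b. a \<noteq> b \<longrightarrow> Gam $ a $ b = 0"
    and Gam_pos: "\<forall>a. Gam $ a $ a > 0"
    and Q_pd: "\<forall>i<m. posdef_on (3 * (n - 1)) (Q i)"
    and P_pd: "\<forall>i<m. posdef_on (3 * (n - 1)) (P i)"
    and P_lyap: "\<forall>i<m. lyap_eq (3 * (n - 1)) (Ap (gam i) n) (P i) (Q i)"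
    and om_bdd: "bounded (om_m ` {0..})"
    and sol: "is_solution n m gam Gam P om_m eta r R bh etah xd"
begin

definition "b i t = meas R r i t"
definition "bt i t = b i t - bh i t"
definition "et t = eta - etah t"
definition "X i t = stackX n (\<lambda>j. xd i j t)"
definition "wk i t k = (\<Sum>p<3 * (n - 1). Bp (gam i) n p k * (\<Sum>q<3 * (n - 1). P i p q * X i t q))"
definition "wv i t = corr_w (gam i) n (P i) (X i t)"
definition "V t = (\<Sum>i<m. qf (3 * (n - 1)) (P i) (X i t)) + (\<Sum>i<m. bt i t \<bullet> bt i t)
                 + (\<Sum>a\<in>UNIV. (et t $ a)^2 / Gam$a$a)"
definition "W t = (\<Sum>i<m. qf (3 * (n - 1)) (Q i) (X i t))"

lemma solR: "t \<ge> 0 \<Longrightarrow> SO3 (R t)"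
  using sol unfolding is_solution_def by blast
lemma dR: "t \<ge> 0 \<Longrightarrow> (R has_vector_derivative (R t ** skew (om_m t - eta))) (at t within {0..})"
  using sol unfolding is_solution_def by blast
lemma dxd: "t \<ge> 0 \<Longrightarrow> i < m \<Longrightarrow> j < n - 1 \<Longrightarrow>
   (xd i j has_vector_derivative xd i (Suc j) t) (at t within {0..})"
  using sol unfolding is_solution_def by blast
lemma xdl: "t \<ge> 0 \<Longrightarrow> i < m \<Longrightarrow> xd i (n - 1) t =
   - (\<Sum>k=1..n - 1. gam i k *\<^sub>R xd i (n - k - 1) t) + gam i n *\<^sub>R bt i t"
  using sol unfolding is_solution_def bt_def b_def by blast
lemma dbh: "t \<ge> 0 \<Longrightarrow> i < m \<Longrightarrow>
   (bh i has_vector_derivative (- cross3 (om_m t - etah t) (bh i t) + wv i t)) (at t within {0..})"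
  using sol unfolding is_solution_def wv_def X_def by blast
lemma detah: "t \<ge> 0 \<Longrightarrow>
   (etah has_vector_derivative (- (Gam *v (\<Sum>i<m. cross3 (b i t) (bh i t))))) (at t within {0..})"
  using sol unfolding is_solution_def b_def by blast

lemma db: "t \<ge> 0 \<Longrightarrow> (b i has_vector_derivative - cross3 (om_m t - eta) (b i t)) (at t within {0..})"
proof -
  assume t: "t \<ge> 0"
  have "((\<lambda>t. transpose (R t) *v r i) has_vector_derivative transpose (R t ** skew (om_m t - eta)) *v r i)
     (at t within {0..})"
    using bounded_linear.has_vector_derivative[OF bl_tr dR[OF t]] .
  moreover have "transpose (R t ** skew (om_m t - eta)) *v r i = - cross3 (om_m t - eta) (b i t)"
    unfolding matrix_transpose_mul matrix_vector_mul_assoc[symmetric] transpose_skew b_def meas_def ..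
  ultimately show ?thesis unfolding b_def meas_def by simp
qed

lemma dbt: "t \<ge> 0 \<Longrightarrow> i < m \<Longrightarrow> (bt i has_vector_derivative
   (- cross3 (om_m t - eta) (b i t) - (- cross3 (om_m t - etah t) (bh i t) + wv i t))) (at t within {0..})"
  unfolding bt_def[abs_def] by (intro derivative_intros db dbh)

lemma det: "t \<ge> 0 \<Longrightarrow> (et has_vector_derivative (Gam *v (\<Sum>i<m. cross3 (b i t) (bh i t)))) (at t within {0..})"
  unfolding et_def[abs_def] using has_vector_derivative_diff[OF has_vector_derivative_const detah] by simp

lemma X_eq: "p < 3 * (n - 1) \<Longrightarrow> X i t p = comp3 (xd i (p div 3) t) (p mod 3)"
  by (simp add: X_def stackX_def)

lemma dX: assumes "t \<ge> 0" "i < m" "p < 3 * (n - 1)"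
  shows "((\<lambda>t. X i t p) has_real_derivative comp3 (xd i (p div 3 + 1) t) (p mod 3)) (at t within {0..})"
proof -
  have "p div 3 < n - 1" using assms(3) by (simp add: less_mult_imp_div_less mult.commute)
  then have "((\<lambda>t. comp3 (xd i (p div 3) t) (p mod 3)) has_real_derivative comp3 (xd i (p div 3 + 1) t) (p mod 3)) (at t within {0..})"
    using comp3_deriv[OF _ dxd[OF assms(1,2)]] by simp
  then show ?thesis using X_eq[OF assms(3)] by simp
qed

lemma Xdot_i: assumes "t \<ge> 0" "i < m" "p < 3 * (n - 1)"
  shows "comp3 (xd i (p div 3 + 1) t) (p mod 3)
     = (\<Sum>q<3 * (n - 1). Ap (gam i) n p q * X i t q) + (\<Sum>k<3. Bp (gam i) n p k * comp3 (bt i t) k)"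
  using Xdot[of n "\<lambda>j. xd i j t" "gam i" "bt i t" p] n2 xdl[OF assms(1,2)] assms(3)
  unfolding X_def by simp

lemma dVx: assumes "t \<ge> 0" "i < m"
  shows "((\<lambda>t. qf (3 * (n - 1)) (P i) (X i t)) has_real_derivative
      (- qf (3 * (n - 1)) (Q i) (X i t) + 2 * (\<Sum>k<3. comp3 (bt i t) k * wk i t k))) (at t within {0..})"
proof -
  let ?N = "3 * (n - 1)"
  define x' where "x' p = (\<Sum>q<?N. Ap (gam i) n p q * X i t q) + (\<Sum>k<3. Bp (gam i) n p k * comp3 (bt i t) k)" for p
  have "\<forall>p<?N. ((\<lambda>t. X i t p) has_real_derivative x' p) (at t within {0..})"
    using dX[OF assms] Xdot_i[OF assms] by (simp add: x'_def)
  from qf_deriv[OF this] have d: "((\<lambda>t. qf ?N (P i) (X i t)) has_real_derivative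
     (\<Sum>p<?N. \<Sum>q<?N. x' p * P i p q * X i t q + X i t p * P i p q * x' q)) (at t within {0..})" .
  have sym: "sym_on ?N (P i)" using P_pd assms(2) by (simp add: posdef_on_def)
  have ly: "lyap_eq ?N (Ap (gam i) n) (P i) (Q i)" using P_lyap assms(2) by simp
  have "(\<Sum>p<?N. \<Sum>q<?N. x' p * P i p q * X i t q + X i t p * P i p q * x' q)
      = (\<Sum>p<?N. \<Sum>q<?N. (\<Sum>s<?N. Ap (gam i) n p s * X i t s) * P i p q * X i t q + X i t p * P i p q * (\<Sum>s<?N. Ap (gam i) n q s * X i t s))
      + (\<Sum>p<?N. \<Sum>q<?N. (\<Sum>k<3. Bp (gam i) n p k * comp3 (bt i t) k) * P i p q * X i t q + X i t p * P i p q * (\<Sum>k<3. Bp (gam i) n q k * comp3 (bt i t) k))"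
    unfolding x'_def by (simp add: sum.distrib[symmetric] algebra_simps)
  also have "\<dots> = - qf ?N (Q i) (X i t) + 2 * (\<Sum>k<3. comp3 (bt i t) k * wk i t k)"
    unfolding lyapA[OF ly] lyapB[OF sym] wk_def ..
  finally show ?thesis using d by simp
qed

lemma bt_wv: "bt i t \<bullet> wv i t = (\<Sum>k<3. comp3 (bt i t) k * wk i t k)"
  by (simp add: wv_def corr_w_def Let_def wk_def inner_vec_def sum_3 comp3_nth numeral_3_eq_3
      lessThan_Suc numeral_2_eq_2 comp3_def)

lemma Gam_mv: "(Gam *v v) $ a = Gam $ a $ a * v $ a"
proof -
  have "(Gam *v v) $ a = (\<Sum>c\<in>UNIV. if c = a then Gam $ a $ a * v $ a else 0)"
    unfolding matrix_vector_mult_def vec_lambda_beta using Gam_diag by (intro sum.cong) auto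
  then show ?thesis by simp
qed

lemma dV: assumes t: "t \<ge> 0" shows "(V has_real_derivative - W t) (at t within {0..})"
proof -
  define S where "S = (\<Sum>i<m. cross3 (b i t) (bh i t))"
  define bd where "bd i = - cross3 (om_m t - eta) (b i t) - (- cross3 (om_m t - etah t) (bh i t) + wv i t)" for i
  have d1: "((\<lambda>t. \<Sum>i<m. qf (3 * (n - 1)) (P i) (X i t)) has_real_derivative
     (\<Sum>i<m. - qf (3 * (n - 1)) (Q i) (X i t) + 2 * (bt i t \<bullet> wv i t))) (at t within {0..})"
    using dVx[OF t] by (intro DERIV_sum) (simp add: bt_wv)
  have d2: "((\<lambda>t. \<Sum>i<m. bt i t \<bullet> bt i t) has_real_derivative (\<Sum>i<m. 2 * (bt i t \<bullet> bd i))) (at t within {0..})"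
  proof (intro DERIV_sum)
    fix i assume "i \<in> {..<m}"
    then have "(bt i has_vector_derivative bd i) (at t within {0..})" using dbt[OF t] by (simp add: bd_def)
    from bounded_bilinear.has_vector_derivative[OF bounded_bilinear_inner this this]
    show "((\<lambda>t. bt i t \<bullet> bt i t) has_real_derivative 2 * (bt i t \<bullet> bd i)) (at t within {0..})"
      by (simp add: has_real_derivative_iff_has_vector_derivative inner_commute)
  qed
  have d3: "((\<lambda>t. \<Sum>a\<in>UNIV. (et t $ a)^2 / Gam$a$a) has_real_derivative (\<Sum>a\<in>UNIV. 2 * (et t $ a * S $ a))) (at t within {0..})"
  proof (intro DERIV_sum)
    fix a :: 3
    have "((\<lambda>t. et t $ a) has_real_derivative (Gam *v S) $ a) (at t within {0..})"
      using bounded_linear.has_vector_derivative[OF bounded_linear_vec_nth det[OF t]]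
      by (simp add: has_real_derivative_iff_has_vector_derivative S_def)
    then have "((\<lambda>t. (et t $ a)^2 / Gam$a$a) has_real_derivative (2 * et t $ a * (Gam *v S) $ a) / Gam$a$a) (at t within {0..})"
      using Gam_pos[rule_format, of a] by (auto intro!: derivative_eq_intros)
    moreover have "(2 * et t $ a * (Gam *v S) $ a) / Gam$a$a = 2 * (et t $ a * S $ a)"
      using Gam_pos[rule_format, of a] by (simp add: Gam_mv)
    ultimately show "((\<lambda>t. (et t $ a)^2 / Gam$a$a) has_real_derivative 2 * (et t $ a * S $ a)) (at t within {0..})"
      by simp
  qed
  have "(V has_real_derivative
     (\<Sum>i<m. - qf (3 * (n - 1)) (Q i) (X i t) + 2 * (bt i t \<bullet> wv i t)) + (\<Sum>i<m. 2 * (bt i t \<bullet> bd i))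
      + (\<Sum>a\<in>UNIV. 2 * (et t $ a * S $ a))) (at t within {0..})"
    unfolding V_def[abs_def] by (intro DERIV_add d1 d2 d3)
  moreover have "(\<Sum>a\<in>UNIV. 2 * (et t $ a * S $ a)) = (\<Sum>i<m. 2 * (et t \<bullet> cross3 (b i t) (bh i t)))"
    by (simp add: S_def inner_sum_right inner_vec_def sum_distrib_left sum.swap[of _ UNIV])
  moreover have "(\<Sum>i<m. - qf (3 * (n - 1)) (Q i) (X i t) + 2 * (bt i t \<bullet> wv i t)) + (\<Sum>i<m. 2 * (bt i t \<bullet> bd i))
      + (\<Sum>i<m. 2 * (et t \<bullet> cross3 (b i t) (bh i t)))
      = (\<Sum>i<m. (- qf (3 * (n - 1)) (Q i) (X i t) + 2 * (bt i t \<bullet> wv i t)) + 2 * (bt i t \<bullet> bd i)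
            + 2 * (et t \<bullet> cross3 (b i t) (bh i t)))"
    by (simp add: sum.distrib)
  moreover have "\<dots> = - W t"
    unfolding W_def sum_negf[symmetric]
  proof (rule sum.cong[OF refl])
    fix i
    have "(bt i t \<bullet> wv i t) + (bt i t \<bullet> bd i) + (et t \<bullet> cross3 (b i t) (bh i t)) = 0"
      unfolding bt_def et_def bd_def by (rule key_identity)
    then show "(- qf (3 * (n - 1)) (Q i) (X i t) + 2 * (bt i t \<bullet> wv i t)) + 2 * (bt i t \<bullet> bd i)
            + 2 * (et t \<bullet> cross3 (b i t) (bh i t)) = - qf (3 * (n - 1)) (Q i) (X i t)" by linarith
  qed
  ultimately show ?thesis by simp
qed

lemma qf_nonneg: "posdef_on N M \<Longrightarrow> qf N M v \<ge> 0"
proof -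
  assume "posdef_on N M"
  then obtain c where c: "c > 0" "\<forall>v. c * (\<Sum>p<N. (v p)^2) \<le> qf N M v" using posdef_lower by blast
  have "(\<Sum>p<N. (v p)^2) \<ge> 0" by (simp add: sum_nonneg)
  then have "c * (\<Sum>p<N. (v p)^2) \<ge> 0" using c(1) by simp
  then show ?thesis using c(2)[rule_format, of v] by linarith
qed

lemma W_nonneg: "W t \<ge> 0"
  unfolding W_def using Q_pd by (intro sum_nonneg) (simp add: qf_nonneg)

lemma Wi_le: "i < m \<Longrightarrow> qf (3 * (n - 1)) (Q i) (X i t) \<le> W t"
  unfolding W_def using Q_pd by (intro member_le_sum) (auto simp: qf_nonneg)

lemma V_terms:
  assumes "i < m"
  shows "qf (3 * (n - 1)) (P i) (X i t) \<le> V t" "bt i t \<bullet> bt i t \<le> V t" "(et t $ a)^2 / Gam$a$a \<le> V t"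
    and "V t \<ge> 0"
proof -
  have A: "0 \<le> (\<Sum>i<m. qf (3 * (n - 1)) (P i) (X i t))"
    using P_pd by (intro sum_nonneg) (simp add: qf_nonneg)
  have B: "0 \<le> (\<Sum>i<m. bt i t \<bullet> bt i t)" by (intro sum_nonneg) simp
  have C: "0 \<le> (\<Sum>a\<in>UNIV. (et t $ a)^2 / Gam$a$a)"
    using Gam_pos by (intro sum_nonneg) (simp add: less_imp_le)
  have "qf (3 * (n - 1)) (P i) (X i t) \<le> (\<Sum>i<m. qf (3 * (n - 1)) (P i) (X i t))"
    using P_pd assms by (intro member_le_sum) (auto simp: qf_nonneg)
  then show "qf (3 * (n - 1)) (P i) (X i t) \<le> V t" using B C unfolding V_def by linarith
  have "bt i t \<bullet> bt i t \<le> (\<Sum>i<m. bt i t \<bullet> bt i t)"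
    using assms by (intro member_le_sum) auto
  then show "bt i t \<bullet> bt i t \<le> V t" using A C unfolding V_def by linarith
  have "(et t $ a)^2 / Gam$a$a \<le> (\<Sum>a\<in>UNIV. (et t $ a)^2 / Gam$a$a)"
    using Gam_pos by (intro member_le_sum) (auto simp: less_imp_le)
  then show "(et t $ a)^2 / Gam$a$a \<le> V t" using A B unfolding V_def by linarith
  show "V t \<ge> 0" using A B C unfolding V_def by linarith
qed

lemma V_et: "(et t $ a)^2 / Gam$a$a \<le> V t"
proof -
  have A: "0 \<le> (\<Sum>i<m. qf (3 * (n - 1)) (P i) (X i t))"
    using P_pd by (intro sum_nonneg) (simp add: qf_nonneg)
  have B: "0 \<le> (\<Sum>i<m. bt i t \<bullet> bt i t)" by (intro sum_nonneg) simp
  have "(et t $ a)^2 / Gam$a$a \<le> (\<Sum>a\<in>UNIV. (et t $ a)^2 / Gam$a$a)"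
    using Gam_pos by (intro member_le_sum) (auto simp: less_imp_le)
  then show ?thesis using A B unfolding V_def by linarith
qed

lemma V_nonneg: "V t \<ge> 0"
proof -
  have A: "0 \<le> (\<Sum>i<m. qf (3 * (n - 1)) (P i) (X i t))"
    using P_pd by (intro sum_nonneg) (simp add: qf_nonneg)
  have B: "0 \<le> (\<Sum>i<m. bt i t \<bullet> bt i t)" by (intro sum_nonneg) simp
  have C: "0 \<le> (\<Sum>a\<in>UNIV. (et t $ a)^2 / Gam$a$a)"
    using Gam_pos by (intro sum_nonneg) (simp add: less_imp_le)
  show ?thesis using A B C unfolding V_def by linarith
qed

lemma V_mono: assumes "0 \<le> s" "s \<le> t" shows "V t \<le> V s"
proof -
  obtain x where "x \<in> {s..t}" "V t - V s = - W x * (t - s)"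
    using mvt0[OF assms, of V "\<lambda>t. - W t"] dV by blast
  moreover have "W x \<ge> 0" by (rule W_nonneg)
  moreover have "W x * (t - s) \<ge> 0" using \<open>W x \<ge> 0\<close> assms by simp
  ultimately show ?thesis by linarith
qed

lemma V_conv: "\<exists>L. (V \<longlongrightarrow> L) at_top"
proof -
  define L where "L = Inf (V ` {0..})"
  have bdd: "bdd_below (V ` {0..})" using V_nonneg by (auto intro!: bdd_belowI[of _ 0])
  have Lle: "t \<ge> 0 \<Longrightarrow> L \<le> V t" for t unfolding L_def by (rule cInf_lower[OF _ bdd]) auto
  have "(V \<longlongrightarrow> L) at_top"
  proof (rule tendstoI)
    fix e :: real assume e: "e > 0"
    have "\<exists>x\<in>V ` {0..}. x < L + e"
      unfolding L_def by (rule cInf_lessD) (use e in auto)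
    then obtain s where s: "s \<ge> 0" "V s < L + e" by auto
    show "eventually (\<lambda>t. dist (V t) L < e) at_top"
      unfolding eventually_at_top_linorder
    proof (intro exI[of _ s] allI impI)
      fix t assume "t \<ge> s"
      then have "V t \<le> V s" "L \<le> V t" using V_mono s Lle by auto
      then show "dist (V t) L < e" using s by (simp add: dist_real_def)
    qed
  qed
  then show ?thesis by blast
qed

lemma Vle0: "t \<ge> 0 \<Longrightarrow> V t \<le> V 0" using V_mono[of 0 t] by simp

lemma bt_bd: assumes "t \<ge> 0" "i < m" shows "norm (bt i t) \<le> sqrt (V 0)"
proof -
  have "bt i t \<bullet> bt i t \<le> V 0" using V_terms(2)[OF assms(2), of t] Vle0[OF assms(1)] by linarith
  then show ?thesis by (simp add: norm_eq_sqrt_inner)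
qed

lemma etc_bd: assumes "t \<ge> 0" shows "\<bar>et t $ a\<bar> \<le> sqrt (Gam$a$a * V 0)"
proof -
  have g: "Gam$a$a > 0" using Gam_pos by blast
  have "(et t $ a)^2 / Gam$a$a \<le> V 0" using V_et[of t a] Vle0[OF assms] by linarith
  then have "(et t $ a)^2 \<le> Gam$a$a * V 0" using g by (simp add: divide_le_eq mult.commute)
  then show ?thesis by (metis real_sqrt_abs real_sqrt_le_mono)
qed

definition "BE = (\<Sum>a\<in>UNIV. sqrt (Gam$a$a * V 0))"

lemma et_bd: "t \<ge> 0 \<Longrightarrow> norm (et t) \<le> BE"
  unfolding BE_def by (rule order_trans[OF norm_le_l1_cart], rule sum_mono, rule etc_bd)

lemma X_bd: "\<exists>BX. \<forall>i<m. \<forall>t\<ge>0. \<forall>p<3 * (n - 1). \<bar>X i t p\<bar> \<le> BX"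
proof (rule unif)
  show "\<forall>i<m. \<exists>BX. \<forall>t\<ge>0. \<forall>p<3 * (n - 1). \<bar>X i t p\<bar> \<le> BX"
  proof (intro allI impI)
    fix i assume i: "i < m"
    obtain c where c: "c > 0" "\<forall>v. c * (\<Sum>p<3 * (n - 1). (v p)^2) \<le> qf (3 * (n - 1)) (P i) v"
      using posdef_lower P_pd i by blast
    show "\<exists>BX. \<forall>t\<ge>0. \<forall>p<3 * (n - 1). \<bar>X i t p\<bar> \<le> BX"
    proof (intro exI[of _ "sqrt (V 0 / c)"] allI impI)
      fix t :: real and p :: nat assume t: "t \<ge> 0" and p: "p < 3 * (n - 1)"
      have "(X i t p)^2 \<le> (\<Sum>q<3 * (n - 1). (X i t q)^2)" using p by (intro member_le_sum) auto
      then have "c * (X i t p)^2 \<le> c * (\<Sum>q<3 * (n - 1). (X i t q)^2)" using c(1) by simp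
      also have "\<dots> \<le> V 0" using c(2)[rule_format, of "X i t"] V_terms(1)[OF i, of t] Vle0[OF t] by linarith
      finally have "c * (X i t p)^2 \<le> V 0" .
      then have "(X i t p)^2 \<le> V 0 / c" using c(1) by (simp add: le_divide_eq mult.commute)
      then show "\<bar>X i t p\<bar> \<le> sqrt (V 0 / c)" by (metis real_sqrt_abs real_sqrt_le_mono)
    qed
  qed
qed (meson order_trans)

lemma xd_comp: "j < n - 1 \<Longrightarrow> k < 3 \<Longrightarrow> comp3 (xd i j t) k = X i t (3*j + k)"
  by (subst X_eq) auto

lemma xd_bd: "\<exists>BD. \<forall>i<m. \<forall>t\<ge>0. \<forall>j<n. norm (xd i j t) \<le> BD"
proof -
  obtain BX where BX: "\<forall>i<m. \<forall>t\<ge>0. \<forall>p<3 * (n - 1). \<bar>X i t p\<bar> \<le> BX" using X_bd by blast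
  have low: "norm (xd i j t) \<le> 3 * BX" if "i < m" "t \<ge> 0" "j < n - 1" for i t j
  proof -
    have "\<bar>comp3 (xd i j t) k\<bar> \<le> BX" if "k < 3" for k
      using BX \<open>i < m\<close> \<open>t \<ge> 0\<close> xd_comp[OF \<open>j < n - 1\<close> that] \<open>j < n - 1\<close> that by auto
    then have "\<bar>comp3 (xd i j t) 0\<bar> \<le> BX" "\<bar>comp3 (xd i j t) 1\<bar> \<le> BX" "\<bar>comp3 (xd i j t) 2\<bar> \<le> BX"
      by auto
    then show ?thesis using norm_le_comp3[of "xd i j t"] by linarith
  qed
  show ?thesis
  proof (rule unif)
    show "\<forall>i<m. \<exists>BD. \<forall>t\<ge>0. \<forall>j<n. norm (xd i j t) \<le> BD"
    proof (intro allI impI)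
      fix i assume i: "i < m"
      define C where "C = (\<Sum>k=1..n - 1. \<bar>gam i k\<bar> * (3 * BX)) + \<bar>gam i n\<bar> * sqrt (V 0)"
      show "\<exists>BD. \<forall>t\<ge>0. \<forall>j<n. norm (xd i j t) \<le> BD"
      proof (intro exI[of _ "\<bar>3 * BX\<bar> + \<bar>C\<bar>"] allI impI)
        fix t :: real and j assume t: "t \<ge> 0" and j: "j < n"
        show "norm (xd i j t) \<le> \<bar>3 * BX\<bar> + \<bar>C\<bar>"
        proof (cases "j < n - 1")
          case True then show ?thesis using low[OF i t True] by linarith
        next
          case False
          then have jj: "j = n - 1" using j by simp
          have "norm (xd i (n - 1) t) \<le> norm (\<Sum>k=1..n - 1. gam i k *\<^sub>R xd i (n - k - 1) t) + norm (gam i n *\<^sub>R bt i t)"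
            unfolding xdl[OF t i] using norm_triangle_ineq[of "- (\<Sum>k=1..n - 1. gam i k *\<^sub>R xd i (n - k - 1) t)" "gam i n *\<^sub>R bt i t"] by simp
          also have "\<dots> \<le> (\<Sum>k=1..n - 1. \<bar>gam i k\<bar> * (3 * BX)) + \<bar>gam i n\<bar> * sqrt (V 0)"
          proof (rule add_mono)
            have "norm (\<Sum>k=1..n - 1. gam i k *\<^sub>R xd i (n - k - 1) t) \<le> (\<Sum>k=1..n - 1. norm (gam i k *\<^sub>R xd i (n - k - 1) t))"
              by (rule norm_sum)
            also have "\<dots> \<le> (\<Sum>k=1..n - 1. \<bar>gam i k\<bar> * (3 * BX))"
            proof (rule sum_mono)
              fix k assume "k \<in> {1..n - 1}"
              then have "n - k - 1 < n - 1" by auto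
              then have "norm (xd i (n - k - 1) t) \<le> 3 * BX" using low[OF i t] by blast
              then show "norm (gam i k *\<^sub>R xd i (n - k - 1) t) \<le> \<bar>gam i k\<bar> * (3 * BX)"
                by (simp add: mult_left_mono)
            qed
            finally show "norm (\<Sum>k=1..n - 1. gam i k *\<^sub>R xd i (n - k - 1) t) \<le> (\<Sum>k=1..n - 1. \<bar>gam i k\<bar> * (3 * BX))" .
            show "norm (gam i n *\<^sub>R bt i t) \<le> \<bar>gam i n\<bar> * sqrt (V 0)"
              using bt_bd[OF t i] by (simp add: mult_left_mono)
          qed
          finally have "norm (xd i j t) \<le> C" using jj unfolding C_def by simp
          then show ?thesis by linarith
        qed
      qed
    qed
  qed (meson order_trans)
qed

lemma wv_eq: "wv i t = vector [wk i t 0, wk i t 1, wk i t 2]"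
  by (simp add: wv_def corr_w_def Let_def wk_def)

lemma wv_bd: "\<exists>BW. \<forall>i<m. \<forall>t\<ge>0. norm (wv i t) \<le> BW"
proof -
  obtain BX where BX: "\<forall>i<m. \<forall>t\<ge>0. \<forall>p<3 * (n - 1). \<bar>X i t p\<bar> \<le> BX" using X_bd by blast
  show ?thesis
  proof (rule unif)
    show "\<forall>i<m. \<exists>BW. \<forall>t\<ge>0. norm (wv i t) \<le> BW"
    proof (intro allI impI)
      fix i assume i: "i < m"
      define C where "C k = (\<Sum>p<3 * (n - 1). \<bar>Bp (gam i) n p k\<bar> * (\<Sum>q<3 * (n - 1). \<bar>P i p q\<bar> * BX))" for k
      have wkb: "\<bar>wk i t k\<bar> \<le> C k" if "t \<ge> 0" for t k
        unfolding wk_def C_def by (rule lin_bound) (use BX i that in auto)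
      show "\<exists>BW. \<forall>t\<ge>0. norm (wv i t) \<le> BW"
      proof (intro exI[of _ "C 0 + C 1 + C 2"] allI impI)
        fix t :: real assume t: "t \<ge> 0"
        have "norm (wv i t) \<le> \<bar>wk i t 0\<bar> + \<bar>wk i t 1\<bar> + \<bar>wk i t 2\<bar>"
          using norm_le_l1_cart[of "wv i t"] by (simp add: wv_eq sum_3)
        then show "norm (wv i t) \<le> C 0 + C 1 + C 2" using wkb[OF t, of 0] wkb[OF t, of 1] wkb[OF t, of 2] by linarith
      qed
    qed
  qed (meson order_trans)
qed

lemma om_bd: "\<exists>BO. \<forall>t\<ge>0. norm (om_m t) \<le> BO"
  using om_bdd unfolding bounded_iff by auto

lemma b_norm: "t \<ge> 0 \<Longrightarrow> norm (b i t) = norm (r i)"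
  unfolding b_def meas_def using SO3_norm_bt[OF solR] by simp

lemma bh_bd: "t \<ge> 0 \<Longrightarrow> i < m \<Longrightarrow> norm (bh i t) \<le> norm (r i) + sqrt (V 0)"
proof -
  assume t: "t \<ge> 0" and i: "i < m"
  have "bh i t = b i t - bt i t" by (simp add: bt_def)
  then have "norm (bh i t) \<le> norm (b i t) + norm (bt i t)" by (metis norm_triangle_ineq4)
  then show ?thesis using b_norm[OF t, of i] bt_bd[OF t i] by linarith
qed

lemma etah_bd: "t \<ge> 0 \<Longrightarrow> norm (etah t) \<le> norm eta + BE"
proof -
  assume t: "t \<ge> 0"
  have "etah t = eta - et t" by (simp add: et_def)
  then have "norm (etah t) \<le> norm eta + norm (et t)" by (metis norm_triangle_ineq4)
  then show ?thesis using et_bd[OF t] by linarith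
qed

definition "xdot i t p = comp3 (xd i (p div 3 + 1) t) (p mod 3)"

definition "dWv t = (\<Sum>i<m. \<Sum>p<3 * (n - 1). \<Sum>q<3 * (n - 1).
   xdot i t p * Q i p q * X i t q + X i t p * Q i p q * xdot i t q)"

lemma dW: "t \<ge> 0 \<Longrightarrow> (W has_real_derivative dWv t) (at t within {0..})"
  unfolding W_def[abs_def] dWv_def xdot_def
  by (intro DERIV_sum qf_deriv allI impI dX) auto

lemma W_lim: "(W \<longlongrightarrow> 0) at_top"
proof -
  obtain BX where BX: "\<forall>i<m. \<forall>t\<ge>0. \<forall>p<3 * (n - 1). \<bar>X i t p\<bar> \<le> BX" using X_bd by blast
  obtain BD where BD: "\<forall>i<m. \<forall>t\<ge>0. \<forall>j<n. norm (xd i j t) \<le> BD" using xd_bd by blast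
  define B where "B = \<bar>BX\<bar> + \<bar>BD\<bar>"
  define M where "M = (\<Sum>i<m. (\<Sum>p<3 * (n - 1). \<Sum>q<3 * (n - 1). 2 * (B * \<bar>Q i p q\<bar> * B)))"
  obtain L where L: "(V \<longlongrightarrow> L) at_top" using V_conv by blast
  have bd: "\<forall>t\<ge>0. \<bar>- dWv t\<bar> \<le> M"
  proof (intro allI impI)
    fix t :: real assume t: "t \<ge> 0"
    have "\<bar>dWv t\<bar> \<le> (\<Sum>i<m. \<bar>\<Sum>p<3 * (n - 1). \<Sum>q<3 * (n - 1).
        xdot i t p * Q i p q * X i t q + X i t p * Q i p q * xdot i t q\<bar>)"
      unfolding dWv_def by (rule sum_abs)
    also have "\<dots> \<le> M" unfolding M_def
    proof (rule sum_mono, rule qf_deriv_bound)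
      fix i assume i: "i \<in> {..<m}"
      show "\<forall>p<3 * (n - 1). \<bar>X i t p\<bar> \<le> B"
      proof (intro allI impI)
        fix p assume "p < 3 * (n - 1)"
        then have "\<bar>X i t p\<bar> \<le> BX" using BX i t by blast
        then show "\<bar>X i t p\<bar> \<le> B" unfolding B_def by linarith
      qed
      show "\<forall>p<3 * (n - 1). \<bar>xdot i t p\<bar> \<le> B"
      proof (intro allI impI)
        fix p assume p: "p < 3 * (n - 1)"
        then have "p div 3 + 1 < n" using n2 by (simp add: less_mult_imp_div_less mult.commute)
        then have "norm (xd i (p div 3 + 1) t) \<le> BD" using BD i t by auto
        moreover have "\<bar>xdot i t p\<bar> \<le> norm (xd i (p div 3 + 1) t)"
          unfolding xdot_def by (rule comp3_le_norm) simp
        ultimately show "\<bar>xdot i t p\<bar> \<le> B" unfolding B_def by linarith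
      qed
    qed
    finally show "\<bar>- dWv t\<bar> \<le> M" by simp
  qed
  have dy: "\<forall>t\<ge>0. (V has_real_derivative (- W t + 0)) (at t within {0..})" using dV by simp
  have dg: "\<forall>t\<ge>0. ((\<lambda>t. - W t) has_real_derivative - dWv t) (at t within {0..})"
    using dW by (auto intro!: derivative_eq_intros)
  have "((\<lambda>t. - W t) \<longlongrightarrow> 0) at_top"
    by (rule barbalat[OF dy dg bd tendsto_const L])
  then show ?thesis using tendsto_minus[of "\<lambda>t. - W t" 0 at_top] by simp
qed

lemma X_lim: assumes i: "i < m" and p: "p < 3 * (n - 1)" shows "((\<lambda>t. X i t p) \<longlongrightarrow> 0) at_top"
proof -
  obtain c where c: "c > 0" "\<forall>v. c * (\<Sum>p<3 * (n - 1). (v p)^2) \<le> qf (3 * (n - 1)) (Q i) v"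
    using posdef_lower Q_pd i by blast
  have "norm (X i t p) \<le> sqrt (W t / c)" for t
  proof -
    have "(X i t p)^2 \<le> (\<Sum>q<3 * (n - 1). (X i t q)^2)" using p by (intro member_le_sum) auto
    then have "c * (X i t p)^2 \<le> c * (\<Sum>q<3 * (n - 1). (X i t q)^2)" using c(1) by simp
    also have "\<dots> \<le> W t" using c(2)[rule_format, of "X i t"] Wi_le[OF i, of t] by linarith
    finally have "(X i t p)^2 \<le> W t / c" using c(1) by (simp add: le_divide_eq mult.commute)
    then show ?thesis by (metis real_norm_def real_sqrt_abs real_sqrt_le_mono)
  qed
  moreover have "((\<lambda>t. sqrt (W t / c)) \<longlongrightarrow> 0) at_top"
    using tendsto_real_sqrt[OF tendsto_divide[OF W_lim tendsto_const, of c]] c(1) by simp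
  ultimately show ?thesis by (intro Lim_null_comparison[of "\<lambda>t. X i t p" "\<lambda>t. sqrt (W t / c)"]) auto
qed

lemma xd_lim: assumes "i < m" "j < n - 1" "k < 3"
  shows "((\<lambda>t. comp3 (xd i j t) k) \<longlongrightarrow> 0) at_top"
  using X_lim[OF assms(1), of "3*j+k"] assms xd_comp[OF assms(2,3)] by simp

definition "btd i t = - cross3 (om_m t - eta) (b i t) - (- cross3 (om_m t - etah t) (bh i t) + wv i t)"

lemma btd_bd: assumes i: "i < m" shows "\<exists>BB. \<forall>t\<ge>0. norm (btd i t) \<le> BB"
proof -
  obtain BO where BO: "\<forall>t\<ge>0. norm (om_m t) \<le> BO" using om_bd by blast
  obtain BW where BW: "\<forall>i<m. \<forall>t\<ge>0. norm (wv i t) \<le> BW" using wv_bd by blast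
  show ?thesis
  proof (intro exI[of _ "(BO + norm eta) * norm (r i) + (BO + norm eta + BE) * (norm (r i) + sqrt (V 0)) + BW"] allI impI)
    fix t :: real assume t: "t \<ge> 0"
    have o1: "norm (om_m t - eta) \<le> BO + norm eta" using BO t norm_triangle_ineq4[of "om_m t" eta] by auto
    have o2: "norm (om_m t - etah t) \<le> BO + norm eta + BE"
      using BO t norm_triangle_ineq4[of "om_m t" "etah t"] etah_bd[OF t] by auto
    have c1: "norm (cross3 (om_m t - eta) (b i t)) \<le> (BO + norm eta) * norm (r i)"
      using norm_cross_le[of "om_m t - eta" "b i t"] b_norm[OF t, of i] o1
      by (smt (verit) mult_right_mono norm_ge_zero)
    have c2: "norm (cross3 (om_m t - etah t) (bh i t)) \<le> (BO + norm eta + BE) * (norm (r i) + sqrt (V 0))"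
      using norm_cross_le[of "om_m t - etah t" "bh i t"] bh_bd[OF t i] o2
      by (smt (verit) mult_mono norm_ge_zero)
    have "norm (btd i t) \<le> norm (cross3 (om_m t - eta) (b i t)) + norm (cross3 (om_m t - etah t) (bh i t)) + norm (wv i t)"
      unfolding btd_def by (smt (verit) norm_minus_cancel norm_triangle_ineq norm_triangle_ineq4)
    then show "norm (btd i t) \<le> (BO + norm eta) * norm (r i) + (BO + norm eta + BE) * (norm (r i) + sqrt (V 0)) + BW"
      using c1 c2 BW i t by fastforce
  qed
qed

lemma dbt': "t \<ge> 0 \<Longrightarrow> i < m \<Longrightarrow> (bt i has_vector_derivative btd i t) (at t within {0..})"
  unfolding btd_def by (rule dbt)

definition "Fv i t = - (\<Sum>k=1..n - 1. gam i k *\<^sub>R xd i (n - k - 1) t) + gam i n *\<^sub>R bt i t"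
definition "Fd i t = - (\<Sum>k=1..n - 1. gam i k *\<^sub>R xd i (n - k) t) + gam i n *\<^sub>R btd i t"

lemma dF: assumes t: "t \<ge> 0" and i: "i < m" shows "(Fv i has_vector_derivative Fd i t) (at t within {0..})"
proof -
  have "((\<lambda>t. \<Sum>k=1..n - 1. gam i k *\<^sub>R xd i (n - k - 1) t) has_vector_derivative
         (\<Sum>k=1..n - 1. gam i k *\<^sub>R xd i (n - k) t)) (at t within {0..})"
  proof (rule has_vector_derivative_sum)
    fix k assume k: "k \<in> {1..n - 1}"
    then have "n - k - 1 < n - 1" "Suc (n - k - 1) = n - k" by auto
    then have "(xd i (n - k - 1) has_vector_derivative xd i (n - k) t) (at t within {0..})"
      using dxd[OF t i, of "n - k - 1"] by simp
    then show "((\<lambda>t. gam i k *\<^sub>R xd i (n - k - 1) t) has_vector_derivative gam i k *\<^sub>R xd i (n - k) t) (at t within {0..})"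
      using has_vector_derivative_scaleR[OF DERIV_const[of "gam i k"]] by simp
  qed
  moreover have "((\<lambda>t. gam i n *\<^sub>R bt i t) has_vector_derivative gam i n *\<^sub>R btd i t) (at t within {0..})"
    using has_vector_derivative_scaleR[OF DERIV_const[of "gam i n"] dbt'[OF t i]] by simp
  ultimately show ?thesis unfolding Fv_def[abs_def] Fd_def
    by (intro has_vector_derivative_add has_vector_derivative_minus)
qed

lemma Fd_bd: assumes i: "i < m" shows "\<exists>BF. \<forall>t\<ge>0. norm (Fd i t) \<le> BF"
proof -
  obtain BD where BD: "\<forall>i<m. \<forall>t\<ge>0. \<forall>j<n. norm (xd i j t) \<le> BD" using xd_bd by blast
  obtain BB where BB: "\<forall>t\<ge>0. norm (btd i t) \<le> BB" using btd_bd[OF i] by blast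
  show ?thesis
  proof (intro exI[of _ "(\<Sum>k=1..n - 1. \<bar>gam i k\<bar> * BD) + \<bar>gam i n\<bar> * BB"] allI impI)
    fix t :: real assume t: "t \<ge> 0"
    have "norm (Fd i t) \<le> norm (\<Sum>k=1..n - 1. gam i k *\<^sub>R xd i (n - k) t) + norm (gam i n *\<^sub>R btd i t)"
      unfolding Fd_def using norm_triangle_ineq[of "- (\<Sum>k=1..n - 1. gam i k *\<^sub>R xd i (n - k) t)" "gam i n *\<^sub>R btd i t"] by simp
    also have "\<dots> \<le> (\<Sum>k=1..n - 1. \<bar>gam i k\<bar> * BD) + \<bar>gam i n\<bar> * BB"
    proof (rule add_mono)
      have "norm (\<Sum>k=1..n - 1. gam i k *\<^sub>R xd i (n - k) t) \<le> (\<Sum>k=1..n - 1. norm (gam i k *\<^sub>R xd i (n - k) t))"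
        by (rule norm_sum)
      also have "\<dots> \<le> (\<Sum>k=1..n - 1. \<bar>gam i k\<bar> * BD)"
      proof (rule sum_mono)
        fix k assume "k \<in> {1..n - 1}"
        then have "n - k < n" by auto
        then have "norm (xd i (n - k) t) \<le> BD" using BD i t by blast
        then show "norm (gam i k *\<^sub>R xd i (n - k) t) \<le> \<bar>gam i k\<bar> * BD" by (simp add: mult_left_mono)
      qed
      finally show "norm (\<Sum>k=1..n - 1. gam i k *\<^sub>R xd i (n - k) t) \<le> (\<Sum>k=1..n - 1. \<bar>gam i k\<bar> * BD)" .
      show "norm (gam i n *\<^sub>R btd i t) \<le> \<bar>gam i n\<bar> * BB" using BB t by (simp add: mult_left_mono)
    qed
    finally show "norm (Fd i t) \<le> (\<Sum>k=1..n - 1. \<bar>gam i k\<bar> * BD) + \<bar>gam i n\<bar> * BB" .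
  qed
qed

lemma Fc_lim: assumes i: "i < m" and c: "c < 3" shows "((\<lambda>t. comp3 (Fv i t) c) \<longlongrightarrow> 0) at_top"
proof -
  obtain BF where BF: "\<forall>t\<ge>0. norm (Fd i t) \<le> BF" using Fd_bd[OF i] by blast
  have nn: "n - 2 < n - 1" "Suc (n - 2) = n - 1" using n2 by auto
  have dy: "\<forall>t\<ge>0. ((\<lambda>t. comp3 (xd i (n - 2) t) c) has_real_derivative (comp3 (Fv i t) c + 0)) (at t within {0..})"
  proof (intro allI impI)
    fix t :: real assume t: "t \<ge> 0"
    have "((\<lambda>t. comp3 (xd i (n - 2) t) c) has_real_derivative comp3 (xd i (Suc (n - 2)) t) c) (at t within {0..})"
      by (rule comp3_deriv[OF c dxd[OF t i nn(1)]])
    moreover have "xd i (Suc (n - 2)) t = Fv i t" unfolding nn(2) Fv_def by (rule xdl[OF t i])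
    ultimately show "((\<lambda>t. comp3 (xd i (n - 2) t) c) has_real_derivative (comp3 (Fv i t) c + 0)) (at t within {0..})"
      by simp
  qed
  have dg: "\<forall>t\<ge>0. ((\<lambda>t. comp3 (Fv i t) c) has_real_derivative comp3 (Fd i t) c) (at t within {0..})"
    using comp3_deriv[OF c dF[OF _ i]] by blast
  have bd: "\<forall>t\<ge>0. \<bar>comp3 (Fd i t) c\<bar> \<le> BF"
    using BF comp3_le_norm[OF c] order_trans by blast
  show ?thesis by (rule barbalat[OF dy dg bd tendsto_const xd_lim[OF i nn(1) c]])
qed

lemma bt_lim: assumes i: "i < m" shows "(bt i \<longlongrightarrow> 0) at_top"
proof -
  have gn0: "gam i n \<noteq> 0" using gn i by blast
  have cl: "((\<lambda>t. comp3 (bt i t) c) \<longlongrightarrow> 0) at_top" if c: "c < 3" for c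
  proof -
    have eq: "comp3 (bt i t) c = (comp3 (Fv i t) c + (\<Sum>k=1..n - 1. gam i k * comp3 (xd i (n - k - 1) t) c)) / gam i n" for t
      using c gn0 unfolding Fv_def by (simp add: comp3_add comp3_diff comp3_neg comp3_sum comp3_scale field_simps)
    have "((\<lambda>t. (comp3 (Fv i t) c + (\<Sum>k=1..n - 1. gam i k * comp3 (xd i (n - k - 1) t) c)) / gam i n) \<longlongrightarrow>
        (0 + (\<Sum>k=1..n - 1. gam i k * 0)) / gam i n) at_top"
    proof (intro tendsto_intros Fc_lim[OF i c])
      fix k assume "k \<in> {1..n - 1}"
      then have "n - k - 1 < n - 1" by auto
      then show "((\<lambda>t. comp3 (xd i (n - k - 1) t) c) \<longlongrightarrow> 0) at_top" by (rule xd_lim[OF i _ c])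
    qed (rule gn0)
    then show ?thesis unfolding eq by simp
  qed
  have "((\<lambda>t. \<bar>comp3 (bt i t) 0\<bar> + \<bar>comp3 (bt i t) 1\<bar> + \<bar>comp3 (bt i t) 2\<bar>) \<longlongrightarrow> 0 + 0 + 0) at_top"
    by (intro tendsto_add tendsto_rabs_zero cl) auto
  then show ?thesis by (intro Lim_null_comparison[of "bt i" "\<lambda>t. \<bar>comp3 (bt i t) 0\<bar> + \<bar>comp3 (bt i t) 1\<bar> + \<bar>comp3 (bt i t) 2\<bar>"])
    (use norm_le_comp3 in auto)
qed


end


lemma bb_cross: "bounded_bilinear (cross3 :: real^3 \<Rightarrow> real^3 \<Rightarrow> real^3)"
  using bilinear_cross bilinear_conv_bounded_bilinear by blast

lemma cross_bound:
  assumes "norm (a::real^3) \<le> A" "norm b \<le> B" shows "norm (cross3 a b) \<le> A * B"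
proof -
  have "norm a * norm b \<le> A * B" using assms by (intro mult_mono) (auto intro: order_trans[OF norm_ge_zero])
  then show ?thesis using norm_cross_le[of a b] by linarith
qed

lemma vec_lim0: "(\<And>a. ((\<lambda>t. f t $ a) \<longlongrightarrow> 0) F) \<Longrightarrow> (f \<longlongrightarrow> (0::real^3)) F"
  by (rule vec_tendstoI) simp


definition Kc :: "nat \<Rightarrow> nat \<Rightarrow> (nat \<Rightarrow> nat \<Rightarrow> nat \<Rightarrow> real) \<Rightarrow> real^3^3 \<Rightarrow> real" where
  "Kc n m P Gam = (\<Sum>i<m. \<Sum>p<3 * (n - 1). \<Sum>q<3 * (n - 1). \<bar>P i p q\<bar>) + real m + (\<Sum>a\<in>UNIV. 1 / Gam$a$a)"

lemma qf_abs_bound: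
  assumes "\<forall>p<N. \<bar>x p\<bar> \<le> d"
  shows "qf N M x \<le> (\<Sum>p<N. \<Sum>q<N. \<bar>M p q\<bar>) * d^2"
proof -
  have "qf N M x \<le> (\<Sum>p<N. \<Sum>q<N. \<bar>x p * M p q * x q\<bar>)"
    unfolding qf_def by (intro sum_mono abs_ge_self)
  also have "\<dots> \<le> (\<Sum>p<N. \<Sum>q<N. \<bar>M p q\<bar> * d^2)"
  proof (intro sum_mono)
    fix p q assume "p \<in> {..<N}" "q \<in> {..<N}"
    then have a: "\<bar>x p\<bar> \<le> d" "\<bar>x q\<bar> \<le> d" using assms by auto
    have "\<bar>x p * M p q * x q\<bar> = \<bar>M p q\<bar> * (\<bar>x p\<bar> * \<bar>x q\<bar>)" by (simp add: abs_mult)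
    also have "\<dots> \<le> \<bar>M p q\<bar> * (d * d)" using a by (intro mult_left_mono mult_mono) auto
    finally show "\<bar>x p * M p q * x q\<bar> \<le> \<bar>M p q\<bar> * d^2" by (simp add: power2_eq_square)
  qed
  finally show ?thesis by (simp add: sum_distrib_right)
qed

context sol begin
lemma wk_lim: assumes i: "i < m" shows "((\<lambda>t. wk i t k) \<longlongrightarrow> 0) at_top"
proof -
  have "((\<lambda>t. \<Sum>p<3 * (n - 1). Bp (gam i) n p k * (\<Sum>q<3 * (n - 1). P i p q * X i t q)) \<longlongrightarrow>
        (\<Sum>p<3 * (n - 1). Bp (gam i) n p k * (\<Sum>q<3 * (n - 1). P i p q * 0))) at_top"
    by (intro tendsto_intros X_lim[OF i]) auto
  then show ?thesis unfolding wk_def by simp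
qed

lemma wv_lim: assumes i: "i < m" shows "(wv i \<longlongrightarrow> 0) at_top"
proof -
  have "((\<lambda>t. \<bar>wk i t 0\<bar> + \<bar>wk i t 1\<bar> + \<bar>wk i t 2\<bar>) \<longlongrightarrow> 0 + 0 + 0) at_top"
    by (intro tendsto_add tendsto_rabs_zero wk_lim[OF i])
  moreover have "norm (wv i t) \<le> \<bar>wk i t 0\<bar> + \<bar>wk i t 1\<bar> + \<bar>wk i t 2\<bar>" for t
    using norm_le_l1_cart[of "wv i t"] by (simp add: wv_eq sum_3)
  ultimately show ?thesis
    by (intro Lim_null_comparison[of "wv i" "\<lambda>t. \<bar>wk i t 0\<bar> + \<bar>wk i t 1\<bar> + \<bar>wk i t 2\<bar>"]) auto
qed

definition "bhd i t = - cross3 (om_m t - etah t) (bh i t) + wv i t"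
definition "Sv t = (\<Sum>i<m. cross3 (b i t) (bh i t))"

lemma Sv_bd: "\<exists>BS. \<forall>t\<ge>0. norm (Sv t) \<le> BS"
proof (intro exI[of _ "\<Sum>i<m. norm (r i) * (norm (r i) + sqrt (V 0))"] allI impI)
  fix t :: real assume t: "t \<ge> 0"
  have "norm (Sv t) \<le> (\<Sum>i<m. norm (cross3 (b i t) (bh i t)))" unfolding Sv_def by (rule norm_sum)
  also have "\<dots> \<le> (\<Sum>i<m. norm (r i) * (norm (r i) + sqrt (V 0)))"
  proof (rule sum_mono)
    fix i assume "i \<in> {..<m}"
    then have "norm (bh i t) \<le> norm (r i) + sqrt (V 0)" using bh_bd[OF t] by auto
    then have "norm (b i t) * norm (bh i t) \<le> norm (r i) * (norm (r i) + sqrt (V 0))"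
      using b_norm[OF t, of i] by (simp add: mult_left_mono)
    then show "norm (cross3 (b i t) (bh i t)) \<le> norm (r i) * (norm (r i) + sqrt (V 0))"
      using norm_cross_le[of "b i t" "bh i t"] by linarith
  qed
  finally show "norm (Sv t) \<le> (\<Sum>i<m. norm (r i) * (norm (r i) + sqrt (V 0)))" .
qed

lemma Gam_norm: "norm (Gam *v v) \<le> (\<Sum>a\<in>UNIV. Gam$a$a) * norm v"
proof -
  have "norm (Gam *v v) \<le> (\<Sum>a\<in>UNIV. \<bar>(Gam *v v) $ a\<bar>)" by (rule norm_le_l1_cart)
  also have "\<dots> \<le> (\<Sum>a\<in>UNIV. Gam$a$a * norm v)"
  proof (rule sum_mono)
    fix a :: 3
    have "\<bar>(Gam *v v) $ a\<bar> = Gam$a$a * \<bar>v $ a\<bar>" using Gam_pos[rule_format, of a] by (simp add: Gam_mv abs_mult)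
    also have "\<dots> \<le> Gam$a$a * norm v" using Gam_pos[rule_format, of a] component_le_norm_cart[of v a]
      by (simp add: mult_left_mono)
    finally show "\<bar>(Gam *v v) $ a\<bar> \<le> Gam$a$a * norm v" .
  qed
  finally show ?thesis by (simp add: sum_distrib_right)
qed

lemma ecb_lim: assumes i: "i < m" shows "((\<lambda>t. cross3 (et t) (bh i t)) \<longlongrightarrow> 0) at_top"
proof (rule vec_lim0)
  fix a :: 3
  obtain BO where BO: "\<forall>t\<ge>0. norm (om_m t) \<le> BO" using om_bd by blast
  obtain BW where BW: "\<forall>i<m. \<forall>t\<ge>0. norm (wv i t) \<le> BW" using wv_bd by blast
  obtain BS where BS: "\<forall>t\<ge>0. norm (Sv t) \<le> BS" using Sv_bd by blast
  define Bh where "Bh = norm (r i) + sqrt (V 0)"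
  define Bhd where "Bhd = (BO + norm eta + BE) * Bh + BW"
  define G where "G = (\<Sum>a\<in>UNIV. Gam$a$a)"
  define M where "M = BE * Bhd + G * BS * Bh"
  define g where "g t = cross3 (et t) (bh i t) $ a" for t
  define gd where "gd t = (cross3 (et t) (bhd i t) + cross3 (Gam *v Sv t) (bh i t)) $ a" for t
  define h where "h t = (- cross3 (om_m t - eta) (bt i t) - wv i t) $ a" for t
  have dy: "\<forall>t\<ge>0. ((\<lambda>t. bt i t $ a) has_real_derivative (g t + h t)) (at t within {0..})"
  proof (intro allI impI)
    fix t :: real assume t: "t \<ge> 0"
    have "((\<lambda>t. bt i t $ a) has_real_derivative btd i t $ a) (at t within {0..})"
      using bounded_linear.has_vector_derivative[OF bounded_linear_vec_nth dbt'[OF t i]]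
      by (simp add: has_real_derivative_iff_has_vector_derivative)
    moreover have "btd i t $ a = g t + h t"
    proof -
      have "btd i t = - cross3 (om_m t - eta) (bt i t) + cross3 (et t) (bh i t) - wv i t"
        unfolding btd_def bt_def et_def by (rule btdot_form)
      then show ?thesis unfolding g_def h_def by simp
    qed
    ultimately show "((\<lambda>t. bt i t $ a) has_real_derivative (g t + h t)) (at t within {0..})" by simp
  qed
  have dg: "\<forall>t\<ge>0. (g has_real_derivative gd t) (at t within {0..})"
  proof (intro allI impI)
    fix t :: real assume t: "t \<ge> 0"
    have "((\<lambda>t. cross3 (et t) (bh i t)) has_vector_derivative
        (cross3 (et t) (bhd i t) + cross3 (Gam *v Sv t) (bh i t))) (at t within {0..})"
      using bounded_bilinear.has_vector_derivative[OF bb_cross det[OF t] dbh[OF t i]]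
      by (simp add: bhd_def Sv_def)
    from bounded_linear.has_vector_derivative[OF bounded_linear_vec_nth this, of a]
    show "(g has_real_derivative gd t) (at t within {0..})"
      unfolding g_def[abs_def] gd_def by (simp add: has_real_derivative_iff_has_vector_derivative)
  qed
  have bd: "\<forall>t\<ge>0. \<bar>gd t\<bar> \<le> M"
  proof (intro allI impI)
    fix t :: real assume t: "t \<ge> 0"
    have bh: "norm (bh i t) \<le> Bh" using bh_bd[OF t i] by (simp add: Bh_def)
    have o2: "norm (om_m t - etah t) \<le> BO + norm eta + BE"
      using BO t norm_triangle_ineq4[of "om_m t" "etah t"] etah_bd[OF t] by auto
    have cc: "norm (cross3 (om_m t - etah t) (bh i t)) \<le> (BO + norm eta + BE) * Bh"
      using cross_bound[OF o2 bh] .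
    have "norm (bhd i t) \<le> norm (cross3 (om_m t - etah t) (bh i t)) + norm (wv i t)"
      unfolding bhd_def using norm_triangle_ineq[of "- cross3 (om_m t - etah t) (bh i t)" "wv i t"] by simp
    moreover have "norm (wv i t) \<le> BW" using BW i t by blast
    ultimately have bhdb: "norm (bhd i t) \<le> Bhd" unfolding Bhd_def using cc by linarith
    have e: "norm (et t) \<le> BE" by (rule et_bd[OF t])
    have c1: "norm (cross3 (et t) (bhd i t)) \<le> BE * Bhd"
      using cross_bound[OF e bhdb] .
    have G0: "G \<ge> 0" unfolding G_def using Gam_pos by (simp add: sum_nonneg less_imp_le)
    have "G * norm (Sv t) \<le> G * BS" using BS t G0 by (simp add: mult_left_mono)
    then have "norm (Gam *v Sv t) \<le> G * BS" using Gam_norm[of "Sv t"] unfolding G_def by linarith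
    then have c2: "norm (cross3 (Gam *v Sv t) (bh i t)) \<le> G * BS * Bh"
      using cross_bound[OF _ bh] by blast
    have "\<bar>gd t\<bar> \<le> norm (cross3 (et t) (bhd i t) + cross3 (Gam *v Sv t) (bh i t))"
      unfolding gd_def by (rule component_le_norm_cart)
    also have "\<dots> \<le> norm (cross3 (et t) (bhd i t)) + norm (cross3 (Gam *v Sv t) (bh i t))"
      by (rule norm_triangle_ineq)
    finally show "\<bar>gd t\<bar> \<le> M" unfolding M_def using c1 c2 by linarith
  qed
  have h0: "(h \<longlongrightarrow> 0) at_top"
  proof -
    have "((\<lambda>t. (BO + norm eta) * norm (bt i t) + norm (wv i t)) \<longlongrightarrow> (BO + norm eta) * 0 + 0) at_top"
      by (intro tendsto_add tendsto_mult tendsto_const tendsto_norm_zero bt_lim[OF i] wv_lim[OF i])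
    moreover have "eventually (\<lambda>t. norm (h t) \<le> (BO + norm eta) * norm (bt i t) + norm (wv i t)) at_top"
      using eventually_ge_at_top[of "0::real"]
    proof eventually_elim
      fix t :: real assume t: "t \<ge> 0"
      have o1: "norm (om_m t - eta) \<le> BO + norm eta" using BO t norm_triangle_ineq4[of "om_m t" eta] by auto
      have "norm (cross3 (om_m t - eta) (bt i t)) \<le> (BO + norm eta) * norm (bt i t)"
        using cross_bound[OF o1 order_refl] .
      moreover have "norm (h t) \<le> norm (- cross3 (om_m t - eta) (bt i t) - wv i t)"
        unfolding h_def real_norm_def by (rule component_le_norm_cart)
      moreover have "norm (- cross3 (om_m t - eta) (bt i t) - wv i t) \<le> norm (cross3 (om_m t - eta) (bt i t)) + norm (wv i t)"
        using norm_triangle_ineq4[of "- cross3 (om_m t - eta) (bt i t)" "wv i t"] by simp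
      ultimately show "norm (h t) \<le> (BO + norm eta) * norm (bt i t) + norm (wv i t)" by linarith
    qed
    ultimately show ?thesis by (intro Lim_null_comparison[of h]) auto
  qed
  have yl: "((\<lambda>t. bt i t $ a) \<longlongrightarrow> 0) at_top"
    using tendsto_vec_nth[OF bt_lim[OF i], of a] unfolding zero_index .
  show "((\<lambda>t. cross3 (et t) (bh i t) $ a) \<longlongrightarrow> 0) at_top"
    using barbalat[OF dy dg bd h0 yl] unfolding g_def .
qed

lemma et_lim: assumes nc: "\<exists>i j. i < m \<and> j < m \<and> \<not> collinear {0, r i, r j}"
  shows "(et \<longlongrightarrow> 0) at_top"
proof -
  obtain i j where ij: "i < m" "j < m" "\<not> collinear {0, r i, r j}" using nc by blast
  obtain B where B: "B > 0" "\<forall>u. B * norm u \<le> norm (cross3 u (r i)) + norm (cross3 u (r j))"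
    using cross_inj_bound[OF ij(3)] by blast
  have cb: "norm (cross3 (et t) (b k t)) \<le> norm (cross3 (et t) (bh k t)) + BE * norm (bt k t)"
    if "t \<ge> 0" for t k
  proof -
    have "cross3 (et t) (b k t) = cross3 (et t) (bh k t) + cross3 (et t) (bt k t)"
      by (simp add: bt_def cross_add_right[symmetric])
    then have "norm (cross3 (et t) (b k t)) \<le> norm (cross3 (et t) (bh k t)) + norm (cross3 (et t) (bt k t))"
      by (metis norm_triangle_ineq)
    moreover have "norm (cross3 (et t) (bt k t)) \<le> BE * norm (bt k t)"
      by (rule cross_bound[OF et_bd[OF that] order_refl])
    ultimately show ?thesis by linarith
  qed
  define F where "F t = (norm (cross3 (et t) (bh i t)) + BE * norm (bt i t)
                        + (norm (cross3 (et t) (bh j t)) + BE * norm (bt j t))) / B" for t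
  have "eventually (\<lambda>t. norm (et t) \<le> F t) at_top"
    using eventually_ge_at_top[of "0::real"]
  proof eventually_elim
    fix t :: real assume t: "t \<ge> 0"
    have o: "orthogonal_matrix (R t)" using solR[OF t] by (simp add: SO3_def)
    have "B * norm (et t) = B * norm (R t *v et t)" using o by (simp add: norm_orth)
    also have "\<dots> \<le> norm (cross3 (R t *v et t) (r i)) + norm (cross3 (R t *v et t) (r j))" using B(2) by blast
    also have "\<dots> = norm (cross3 (et t) (b i t)) + norm (cross3 (et t) (b j t))"
      unfolding b_def meas_def using SO3_cross[OF solR[OF t]] by simp
    also have "\<dots> \<le> (norm (cross3 (et t) (bh i t)) + BE * norm (bt i t))
                   + (norm (cross3 (et t) (bh j t)) + BE * norm (bt j t))"
      using cb[OF t, of i] cb[OF t, of j] by linarith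
    finally show "norm (et t) \<le> F t" unfolding F_def using B(1) by (simp add: le_divide_eq mult.commute)
  qed
  moreover have "(F \<longlongrightarrow> ((0 + BE * 0) + (0 + BE * 0)) / B) at_top"
    unfolding F_def
    by (intro tendsto_divide tendsto_add tendsto_mult tendsto_const tendsto_norm_zero
        ecb_lim[OF ij(1)] ecb_lim[OF ij(2)] bt_lim[OF ij(1)] bt_lim[OF ij(2)]) (use B in auto)
  ultimately show ?thesis by (intro Lim_null_comparison[of et F]) auto
qed

lemma V0_bound:
  assumes d: "\<forall>i<m. norm (bt i 0) < d \<and> (\<forall>j<n - 1. norm (xd i j 0) < d)" and e: "norm (et 0) < d"
  shows "V 0 \<le> Kc n m P Gam * d^2"
proof -
  have A: "(\<Sum>i<m. qf (3 * (n - 1)) (P i) (X i 0)) \<le> (\<Sum>i<m. (\<Sum>p<3 * (n - 1). \<Sum>q<3 * (n - 1). \<bar>P i p q\<bar>) * d^2)"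
  proof (rule sum_mono, rule qf_abs_bound, intro allI impI)
    fix i p assume i: "i \<in> {..<m}" and p: "p < 3 * (n - 1)"
    have "p div 3 < n - 1" using p by (simp add: less_mult_imp_div_less mult.commute)
    then have "norm (xd i (p div 3) 0) < d" using d i by auto
    moreover have "\<bar>X i 0 p\<bar> \<le> norm (xd i (p div 3) 0)" using X_eq[OF p] comp3_le_norm[of "p mod 3"] by simp
    ultimately show "\<bar>X i 0 p\<bar> \<le> d" by linarith
  qed
  have B: "(\<Sum>i<m. bt i 0 \<bullet> bt i 0) \<le> (\<Sum>i<m. d^2)"
  proof (rule sum_mono)
    fix i assume "i \<in> {..<m}"
    then have "norm (bt i 0) < d" using d by auto
    then have "(norm (bt i 0))^2 \<le> d^2" by (intro power_mono) auto
    then show "bt i 0 \<bullet> bt i 0 \<le> d^2" by (simp add: power2_norm_eq_inner)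
  qed
  have C: "(\<Sum>a\<in>UNIV. (et 0 $ a)^2 / Gam$a$a) \<le> (\<Sum>a\<in>UNIV. d^2 * (1 / Gam$a$a))"
  proof (rule sum_mono)
    fix a :: 3
    have g: "Gam$a$a > 0" using Gam_pos by blast
    have "\<bar>et 0 $ a\<bar> \<le> d" using component_le_norm_cart[of "et 0" a] e by linarith
    then have "(et 0 $ a)^2 \<le> d^2" by (metis abs_le_square_iff abs_of_nonneg abs_ge_zero order_trans)
    then show "(et 0 $ a)^2 / Gam$a$a \<le> d^2 * (1 / Gam$a$a)" using g by (simp add: divide_right_mono)
  qed
  have "V 0 \<le> (\<Sum>i<m. (\<Sum>p<3 * (n - 1). \<Sum>q<3 * (n - 1). \<bar>P i p q\<bar>) * d^2) + (\<Sum>i<m. d^2) + (\<Sum>a\<in>UNIV. d^2 * (1 / Gam$a$a))"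
    unfolding V_def using A B C by linarith
  also have "\<dots> = Kc n m P Gam * d^2"
    unfolding Kc_def by (simp add: sum_distrib_right sum_distrib_left algebra_simps)
  finally show ?thesis .
qed

end



theorem proposition2:
  fixes n m :: nat
    and gam :: "nat \<Rightarrow> nat \<Rightarrow> real"
    and Gam :: "real^3^3"
    and P Q :: "nat \<Rightarrow> nat \<Rightarrow> nat \<Rightarrow> real"
    and om_m :: "real \<Rightarrow> real^3"
    and eta :: "real^3"
    and r :: "nat \<Rightarrow> real^3"
  assumes n2: "n \<ge> 2"
    and hurw: "\<forall>i<m. hurwitz_coeffs (gam i) n \<and> hurwitz_coeffs (gam i) (n - 1)"
    and Gam_diag: "\<forall>a b. a \<noteq> b \<longrightarrow> Gam $ a $ b = 0"
    and Gam_pos: "\<forall>a. Gam $ a $ a > 0"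
    and Q_pd: "\<forall>i<m. posdef_on (3 * (n - 1)) (Q i)"
    and P_pd: "\<forall>i<m. posdef_on (3 * (n - 1)) (P i)"
    and P_lyap: "\<forall>i<m. lyap_eq (3 * (n - 1)) (Ap (gam i) n) (P i) (Q i)"
    and noncol: "\<exists>i j. i < m \<and> j < m \<and> \<not> collinear {0, r i, r j}"
    and om_bdd: "bounded (om_m ` {0..})"
  shows
    "(\<forall>R bh etah xd. is_solution n m gam Gam P om_m eta r R bh etah xd \<longrightarrow>
        (\<forall>i<m. ((\<lambda>t. meas R r i t - bh i t) \<longlongrightarrow> 0) at_top) \<and>
        ((\<lambda>t. eta - etah t) \<longlongrightarrow> 0) at_top)
     \<and>
     (\<forall>\<epsilon>>0. \<exists>\<delta>>0. \<forall>R bh etah xd.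
        is_solution n m gam Gam P om_m eta r R bh etah xd \<and>
        (\<forall>i<m. norm (meas R r i 0 - bh i 0) < \<delta> \<and> (\<forall>j<n - 1. norm (xd i j 0) < \<delta>)) \<and>
        norm (eta - etah 0) < \<delta>
        \<longrightarrow> (\<forall>t\<ge>0. (\<forall>i<m. norm (meas R r i t - bh i t) < \<epsilon>) \<and> norm (eta - etah t) < \<epsilon>))"
proof -
  have gn: "\<forall>i<m. gam i n \<noteq> 0"
  proof (intro allI impI notI)
    fix i assume i: "i < m" and g0: "gam i n = 0"
    have h: "hurwitz_coeffs (gam i) n" using hurw i by blast
    have "(\<Sum>k=1..n. complex_of_real (gam i k) * (0::complex) ^ (n - k))
        = (\<Sum>k=1..n. if k = n then complex_of_real (gam i n) else 0)"
      by (rule sum.cong) (auto simp: power_0_left)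
    also have "\<dots> = complex_of_real (gam i n)" using n2 by (simp add: sum.delta')
    finally have "(0::complex) ^ n + (\<Sum>k=1..n. complex_of_real (gam i k) * 0 ^ (n - k)) = 0"
      using g0 n2 by simp
    then have "Re (0::complex) < 0" using h unfolding hurwitz_coeffs_def by blast
    then show False by simp
  qed
  have part1: "\<forall>R bh etah xd. is_solution n m gam Gam P om_m eta r R bh etah xd \<longrightarrow>
        (\<forall>i<m. ((\<lambda>t. meas R r i t - bh i t) \<longlongrightarrow> 0) at_top) \<and>
        ((\<lambda>t. eta - etah t) \<longlongrightarrow> 0) at_top"
  proof (intro allI impI)
    fix R bh etah xd assume S: "is_solution n m gam Gam P om_m eta r R bh etah xd"
    interpret sol n m gam Gam P Q om_m eta r R bh etah xd
      using n2 gn Gam_diag Gam_pos Q_pd P_pd P_lyap om_bdd S by unfold_locales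
    show "(\<forall>i<m. ((\<lambda>t. meas R r i t - bh i t) \<longlongrightarrow> 0) at_top) \<and> ((\<lambda>t. eta - etah t) \<longlongrightarrow> 0) at_top"
    proof (intro conjI allI impI)
      fix i assume i: "i < m"
      show "((\<lambda>t. meas R r i t - bh i t) \<longlongrightarrow> 0) at_top"
        using bt_lim[OF i] unfolding bt_def[abs_def] b_def[abs_def] .
    next
      show "((\<lambda>t. eta - etah t) \<longlongrightarrow> 0) at_top"
        using et_lim[OF noncol] unfolding et_def[abs_def] .
    qed
  qed
  have part2: "\<forall>\<epsilon>>0. \<exists>\<delta>>0. \<forall>R bh etah xd.
        is_solution n m gam Gam P om_m eta r R bh etah xd \<and>
        (\<forall>i<m. norm (meas R r i 0 - bh i 0) < \<delta> \<and> (\<forall>j<n - 1. norm (xd i j 0) < \<delta>)) \<and>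
        norm (eta - etah 0) < \<delta>
        \<longrightarrow> (\<forall>t\<ge>0. (\<forall>i<m. norm (meas R r i t - bh i t) < \<epsilon>) \<and> norm (eta - etah t) < \<epsilon>)"
  proof (intro allI impI)
    fix e :: real assume e: "e > 0"
    define K where "K = Kc n m P Gam"
    define G where "G = (\<Sum>a\<in>UNIV. sqrt (Gam$a$a))"
    define s where "s = sqrt K"
    define d where "d = e / (2 * (s + 1) * (G + 1))"
    have Gnn: "0 \<le> Gam$a$a" for a using Gam_pos by (metis less_imp_le)
    have K0: "K \<ge> 0" unfolding K_def Kc_def
      by (intro add_nonneg_nonneg sum_nonneg) (auto simp: Gnn)
    have G0: "G \<ge> 0" unfolding G_def by (intro sum_nonneg) (simp add: Gnn)
    have s0: "s \<ge> 0" unfolding s_def using K0 by simp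
    have D: "2 * (s + 1) * (G + 1) > 0" using s0 G0 by (simp add: add_pos_nonneg)
    have d0: "d > 0" unfolding d_def using e D by simp
    have dd: "d * (2 * (s + 1) * (G + 1)) = e" unfolding d_def using D by (simp add: field_simps)
    have sd: "s * d < e"
    proof -
      have "s * d \<le> (s + 1) * (G + 1) * d" using s0 G0 d0 by (intro mult_right_mono) (auto simp: algebra_simps add_nonneg_nonneg)
      also have "\<dots> = e / 2" using dd by (simp add: algebra_simps)
      finally show ?thesis using e by linarith
    qed
    have Gsd: "G * (s * d) < e"
    proof -
      have "G * (s * d) \<le> (G + 1) * ((s + 1) * d)" using s0 G0 d0 by (intro mult_mono) auto
      also have "\<dots> = e / 2" using dd by (simp add: algebra_simps)
      finally show ?thesis using e by linarith
    qed
    show "\<exists>\<delta>>0. \<forall>R bh etah xd.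
        is_solution n m gam Gam P om_m eta r R bh etah xd \<and>
        (\<forall>i<m. norm (meas R r i 0 - bh i 0) < \<delta> \<and> (\<forall>j<n - 1. norm (xd i j 0) < \<delta>)) \<and>
        norm (eta - etah 0) < \<delta>
        \<longrightarrow> (\<forall>t\<ge>0. (\<forall>i<m. norm (meas R r i t - bh i t) < e) \<and> norm (eta - etah t) < e)"
    proof (rule exI[of _ d], rule conjI[OF d0], intro allI impI)
      fix R bh etah xd and t :: real
      assume A: "is_solution n m gam Gam P om_m eta r R bh etah xd \<and>
        (\<forall>i<m. norm (meas R r i 0 - bh i 0) < d \<and> (\<forall>j<n - 1. norm (xd i j 0) < d)) \<and>
        norm (eta - etah 0) < d"
      assume t: "t \<ge> 0"
      interpret sol n m gam Gam P Q om_m eta r R bh etah xd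
        using n2 gn Gam_diag Gam_pos Q_pd P_pd P_lyap om_bdd conjunct1[OF A] by unfold_locales
      have V0: "V 0 \<le> K * d^2" unfolding K_def
        by (rule V0_bound) (use A in \<open>auto simp: bt_def b_def et_def\<close>)
      have sV: "sqrt (V 0) \<le> s * d"
      proof -
        have "sqrt (V 0) \<le> sqrt (K * d^2)" using V0 by (rule real_sqrt_le_mono)
        also have "\<dots> = s * d" unfolding s_def using d0 by (simp add: real_sqrt_mult)
        finally show ?thesis .
      qed
      show "(\<forall>i<m. norm (meas R r i t - bh i t) < e) \<and> norm (eta - etah t) < e"
      proof (intro conjI allI impI)
        fix i assume i: "i < m"
        have "norm (bt i t) \<le> sqrt (V 0)" by (rule bt_bd[OF t i])
        then show "norm (meas R r i t - bh i t) < e" using sV sd unfolding bt_def b_def by linarith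
      next
        have "BE \<le> (\<Sum>a\<in>UNIV. sqrt (Gam$a$a) * (s * d))"
          unfolding BE_def
        proof (rule sum_mono)
          fix a :: 3
          have "sqrt (Gam$a$a * V 0) = sqrt (Gam$a$a) * sqrt (V 0)" by (simp add: real_sqrt_mult)
          also have "\<dots> \<le> sqrt (Gam$a$a) * (s * d)" using sV by (intro mult_left_mono) (auto simp: Gnn)
          finally show "sqrt (Gam$a$a * V 0) \<le> sqrt (Gam$a$a) * (s * d)" .
        qed
        also have "\<dots> = G * (s * d)" unfolding G_def by (simp add: sum_distrib_right)
        finally have "norm (et t) \<le> G * (s * d)" using et_bd[OF t] by linarith
        then show "norm (eta - etah t) < e" using Gsd unfolding et_def by linarith
      qed
    qed
  qed
  show ?thesis using part1 part2 by blast
qed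


end
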